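(* Let $\Sigma_M\subset\mathbb{C}P^2$ be a torus obtained from the construction in the context (with integers $\alpha_1,\alpha_2,\alpha_3$ such that $\alpha_1-\alpha_3$ and $\alpha_2-\alpha_3$ are relatively prime, and parameters $a_1>a_2>0$, $a_3$ as there). Then its area satisfies $$A(\Sigma_M)>\pi^2\frac{a_1+a_2}{\sqrt{a_1+a_3}}.$$
   Context: $\mathbb{C}P^2$ carries the Fubini–Study metric for which the Hopf projection $S^5\to\mathbb{C}P^2$ is a Riemannian submersion; $A(\Sigma)$ is the area of the immersed torus with respect to the induced metric, computed over a fundamental domain of the period lattice of the immersion. Construction: put $b=-\alpha_1-\alpha_2-\alpha_3$, $c=\alpha_1\alpha_2+\alpha_1\alpha_3+\alpha_2\alpha_3$, $c_1=-\alpha_1\alpha_2\alpha_3$. Let $a_1>a_2>0$ be reals with $P:=a_1^3a_2^2+a_1^2a_2^3+(a_1^2a_2+a_1a_2^2)bc_1+(a_1^2+a_2^2)c_1^2+2a_1^2a_2^2c\le 0$ and $P^2-(a_1-a_2)^2\bigl((a_1+a_2)c_1^2-a_1^2a_2^2+a_1a_2bc_1\bigr)^2\ge0$. Let $c_2$ be a real root of $(a_1-a_2)^2x^4+2Px^2+\bigl((a_1+a_2)c_1^2-a_1^2a_2^2+a_1a_2bc_1\bigr)^2=0$, and set $a_3=\frac{c_1^2+c_2^2}{a_1a_2}$, $a=\frac{bc_1+a_1a_3+a_2a_3-a_1a_2}{c_2}$. Define $v$ by $2e^{v(x)}=a_1\bigl(1-\frac{a_1-a_2}{a_1}\mathrm{sn}^2(x\sqrt{a_1+a_3},k)\bigr)$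 with $k=\frac{a_1-a_2}{a_1+a_3}$, where $\mathrm{sn}(u,k)=\sin\theta$ for $u=\int_0^\theta\frac{d\phi}{\sqrt{1-k^2\sin^2\phi}}$; $v$ has period $T=2u(\pi/2)/\sqrt{a_1+a_3}$. For $i$ modulo 3 let $F_i=\sqrt{\frac{2e^v+\alpha_{i+1}\alpha_{i+2}}{(\alpha_i-\alpha_{i+1})(\alpha_i-\alpha_{i+2})}}$, $G_i(x)=\alpha_i\int_0^x\frac{c_2-ae^{v}}{2\alpha_ie^{v}-c_1}dz$, and $\psi(x,y)=\bigl(F_1e^{i(G_1+\alpha_1y)}:F_2e^{i(G_2+\alpha_2y)}:F_3e^{i(G_3+\alpha_3y)}\bigr)$, a conformal immersion $\mathbb{R}^2\to\mathbb{C}P^2$ with induced metric $2e^{v(x)}(dx^2+dy^2)$. Assume there is $\tau\in\mathbb{R}$ with $\frac{G_1(T)-G_3(T)+(\alpha_1-\alpha_3)\tau}{2\pi},\ \frac{G_2(T)-G_3(T)+(\alpha_2-\alpha_3)\tau}{2\pi}\in\mathbb{Q}$; then $\psi$ is doubly periodic and $\Sigma_M=\psi(\mathbb{R}^2)$ is an immersed torus. *)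

theory Defs
  imports "HOL-Analysis.Analysis"
begin

definition sint :: "(real \<Rightarrow> real) \<Rightarrow> real \<Rightarrow> real" where
  "sint f x = (if 0 \<le> x then integral {0..x} f else - integral {x..0} f)"

definition ellF :: "real \<Rightarrow> real \<Rightarrow> real" where
  "ellF k \<theta> = sint (\<lambda>\<phi>. 1 / sqrt (1 - k\<^sup>2 * (sin \<phi>)\<^sup>2)) \<theta>"

definition jam :: "real \<Rightarrow> real \<Rightarrow> real" where
  "jam k u = (THE \<theta>. ellF k \<theta> = u)"

definition jsn :: "real \<Rightarrow> real \<Rightarrow> real" where
  "jsn k u = sin (jam k u)"

definition alp :: "real \<Rightarrow> real \<Rightarrow> real \<Rightarrow> nat \<Rightarrow> real" where
  "alp \<alpha>1 \<alpha>2 \<alpha>3 i = (if i mod 3 = 1 then \<alpha>1 else if i mod 3 = 2 then \<alpha>2 else \<alpha>3)"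

definition tor_v :: "real \<Rightarrow> real \<Rightarrow> real \<Rightarrow> real \<Rightarrow> real" where
  "tor_v a1 a2 a3 x =
     ln (a1 * (1 - (a1 - a2) / a1 * (jsn ((a1 - a2) / (a1 + a3)) (x * sqrt (a1 + a3)))\<^sup>2) / 2)"

definition tor_T :: "real \<Rightarrow> real \<Rightarrow> real \<Rightarrow> real" where
  "tor_T a1 a2 a3 = 2 * ellF ((a1 - a2) / (a1 + a3)) (pi / 2) / sqrt (a1 + a3)"

definition tor_F :: "real \<Rightarrow> real \<Rightarrow> real \<Rightarrow> real \<Rightarrow> real \<Rightarrow> real \<Rightarrow> nat \<Rightarrow> real \<Rightarrow> real" where
  "tor_F \<alpha>1 \<alpha>2 \<alpha>3 a1 a2 a3 i x =
     (let al = alp \<alpha>1 \<alpha>2 \<alpha>3 in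
      sqrt ((2 * exp (tor_v a1 a2 a3 x) + al (i+1) * al (i+2))
            / ((al i - al (i+1)) * (al i - al (i+2)))))"

definition tor_G :: "real \<Rightarrow> real \<Rightarrow> real \<Rightarrow> real \<Rightarrow> real \<Rightarrow> real \<Rightarrow> real \<Rightarrow> real \<Rightarrow> real
                      \<Rightarrow> nat \<Rightarrow> real \<Rightarrow> real" where
  "tor_G \<alpha>1 \<alpha>2 \<alpha>3 a1 a2 a3 c1 c2 a i x =
     (let al = alp \<alpha>1 \<alpha>2 \<alpha>3 in
      al i * sint (\<lambda>z. (c2 - a * exp (tor_v a1 a2 a3 z))
                        / (2 * al i * exp (tor_v a1 a2 a3 z) - c1)) x)"

text \<open>Homogeneous coordinates (component i = 1,2,3) of psi(x,y) in C^3 - {0}.\<close>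
definition tor_psi :: "real \<Rightarrow> real \<Rightarrow> real \<Rightarrow> real \<Rightarrow> real \<Rightarrow> real \<Rightarrow> real \<Rightarrow> real \<Rightarrow> real
                        \<Rightarrow> nat \<Rightarrow> real \<Rightarrow> real \<Rightarrow> complex" where
  "tor_psi \<alpha>1 \<alpha>2 \<alpha>3 a1 a2 a3 c1 c2 a i x y =
     complex_of_real (tor_F \<alpha>1 \<alpha>2 \<alpha>3 a1 a2 a3 i x)
     * exp (\<i> * complex_of_real (tor_G \<alpha>1 \<alpha>2 \<alpha>3 a1 a2 a3 c1 c2 a i x + alp \<alpha>1 \<alpha>2 \<alpha>3 i * y))"

text \<open>Period lattice of psi as a map into CP^2: translations w with psi(z + w) = psi(z)
  for all z, equality in CP^2 meaning proportionality of homogeneous coordinates.\<close>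
definition period_lattice :: "(nat \<Rightarrow> real \<Rightarrow> real \<Rightarrow> complex) \<Rightarrow> (real \<times> real) set" where
  "period_lattice \<Psi> = {w. \<forall>x y. \<exists>l::complex. l \<noteq> 0 \<and>
        (\<forall>i\<in>{1,2,3}. \<Psi> i (x + fst w) (y + snd w) = l * \<Psi> i x y)}"

definition lattice_basis :: "(real \<times> real) set \<Rightarrow> real \<times> real \<Rightarrow> real \<times> real \<Rightarrow> bool" where
  "lattice_basis L u w \<longleftrightarrow> fst u * snd w - snd u * fst w \<noteq> 0 \<and>
      L = {of_int m *\<^sub>R u + of_int n *\<^sub>R w | m n. True}"

definition fund_par :: "real \<times> real \<Rightarrow> real \<times> real \<Rightarrow> (real \<times> real) set" where
  "fund_par u w = {s *\<^sub>R u + t *\<^sub>R w | s t. 0 \<le> s \<and> s < 1 \<and> 0 \<le> t \<and> t < 1}"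

end

theory Submission
  imports Defs
begin

lemma sint_deriv:
  fixes f :: "real \<Rightarrow> real"
  assumes cf: "continuous_on UNIV f"
  shows "(sint f has_real_derivative f x) (at x)"
proof -
  define R where "R = \<bar>x\<bar> + 1"
  define I where "I = (\<lambda>y. integral {-R..y} f)"
  have intg: "f integrable_on {a..b}" for a b
    by (rule integrable_continuous_real) (use cf continuous_on_subset in blast)
  have eq: "sint f y = I y - I 0" if "\<bar>y\<bar> < R" for y
  proof (cases "0 \<le> y")
    case True
    have "integral {-R..0} f + integral {0..y} f = integral {-R..y} f"
      by (rule Henstock_Kurzweil_Integration.integral_combine) (use True that R_def intg in auto)
    then show ?thesis using True by (simp add: sint_def I_def)
  next
    case False
    have "integral {-R..y} f + integral {y..0} f = integral {-R..0} f"
      by (rule Henstock_Kurzweil_Integration.integral_combine) (use False that R_def intg in auto)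
    then show ?thesis using False by (simp add: sint_def I_def)
  qed
  have d1: "(I has_real_derivative f x) (at x within {-R..R})"
    unfolding I_def
    by (rule integral_has_real_derivative) (use cf continuous_on_subset R_def in auto)
  have "x \<in> interior {-R..R}" using R_def by auto
  then have d2: "(I has_real_derivative f x) (at x)"
    using d1 at_within_interior by metis
  then have d3: "((\<lambda>y. I y - I 0) has_real_derivative f x) (at x)"
    by (auto intro!: derivative_eq_intros)
  show ?thesis
  proof (rule has_field_derivative_transform_within_open[OF d3, of "{-R<..<R}"])
    show "x \<in> {-R<..<R}" using R_def by auto
  qed (use eq in auto)
qed

lemma sint_0[simp]: "sint f 0 = 0"
  by (simp add: sint_def)

definition fk :: "real \<Rightarrow> real \<Rightarrow> real" where
  "fk k = (\<lambda>\<phi>. 1 / sqrt (1 - k\<^sup>2 * (sin \<phi>)\<^sup>2))"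

lemma ellF_sint: "ellF k = sint (fk k)"
  by (simp add: fun_eq_iff ellF_def fk_def)

context
  fixes k :: real
  assumes k2: "k\<^sup>2 < 1"
begin

lemma arg_pos: "1 - k\<^sup>2 * (sin t)\<^sup>2 > 0"
proof -
  have "(sin t)\<^sup>2 \<le> 1" by (metis abs_sin_le_one abs_ge_zero power2_abs power_le_one)
  then have "k\<^sup>2 * (sin t)\<^sup>2 \<le> k\<^sup>2" by (simp add: mult_left_le)
  then show ?thesis using k2 by linarith
qed

lemma fk_ge1: "fk k t \<ge> 1"
proof -
  have "1 - k\<^sup>2 * (sin t)\<^sup>2 \<le> 1" by simp
  then have "sqrt (1 - k\<^sup>2 * (sin t)\<^sup>2) \<le> 1" by simp
  moreover have "sqrt (1 - k\<^sup>2 * (sin t)\<^sup>2) > 0" using arg_pos by simp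
  ultimately show ?thesis by (simp add: fk_def)
qed

lemma fk_pos: "fk k t > 0" using fk_ge1[of t] by linarith

lemma fk_gt1: assumes "k \<noteq> 0" "sin t \<noteq> 0" shows "fk k t > 1"
proof -
  have "k\<^sup>2 * (sin t)\<^sup>2 > 0" using assms by simp
  then have "1 - k\<^sup>2 * (sin t)\<^sup>2 < 1" by simp
  then have "sqrt (1 - k\<^sup>2 * (sin t)\<^sup>2) < 1" by simp
  moreover have "sqrt (1 - k\<^sup>2 * (sin t)\<^sup>2) > 0" using arg_pos by simp
  ultimately show ?thesis by (simp add: fk_def)
qed

lemma fk_cont: "continuous_on UNIV (fk k)"
proof -
  have "\<And>t. sqrt (1 - k\<^sup>2 * (sin t)\<^sup>2) \<noteq> 0" using arg_pos by (simp add: less_imp_neq[symmetric])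
  then show ?thesis unfolding fk_def by (intro continuous_intros) auto
qed

lemma fk_isCont: "isCont (fk k) t"
  using fk_cont continuous_on_eq_continuous_at by blast

lemma fk_per: "fk k (t + pi) = fk k t"
  by (simp add: fk_def)

lemma fk_even: "fk k (- t) = fk k t"
  by (simp add: fk_def)

lemma ellF_deriv: "(ellF k has_real_derivative fk k t) (at t)"
  unfolding ellF_sint by (rule sint_deriv[OF fk_cont])

lemma ellF_isCont: "isCont (ellF k) t"
  using ellF_deriv DERIV_isCont by blast

lemma ellF_0[simp]: "ellF k 0 = 0"
  by (simp add: ellF_sint)

lemma ellF_shift: "ellF k (t + pi) = ellF k t + ellF k pi"
proof -
  have "\<forall>x. ((\<lambda>t. ellF k (t + pi) - ellF k t) has_real_derivative 0) (at x)"
  proof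
    fix x
    have d: "((\<lambda>t. ellF k (t + pi)) has_real_derivative fk k (x + pi) * 1) (at x)"
      by (rule DERIV_chain2[OF ellF_deriv]) (auto intro!: derivative_eq_intros)
    have "((\<lambda>t. ellF k (t + pi) - ellF k t) has_real_derivative fk k (x + pi) * 1 - fk k x) (at x)"
      by (rule DERIV_diff[OF d ellF_deriv])
    then show "((\<lambda>t. ellF k (t + pi) - ellF k t) has_real_derivative 0) (at x)"
      by (simp add: fk_per)
  qed
  from DERIV_isconst_all[OF this, of t 0] show ?thesis by simp
qed

lemma ellF_odd: "ellF k (- t) = - ellF k t"
proof -
  have "\<forall>x. ((\<lambda>t. ellF k (- t) + ellF k t) has_real_derivative 0) (at x)"
  proof
    fix x
    have d: "((\<lambda>t. ellF k (- t)) has_real_derivative fk k (- x) * (- 1)) (at x)"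
      by (rule DERIV_chain2[OF ellF_deriv]) (auto intro!: derivative_eq_intros)
    have "((\<lambda>t. ellF k (- t) + ellF k t) has_real_derivative fk k (- x) * (- 1) + fk k x) (at x)"
      by (rule DERIV_add[OF d ellF_deriv])
    then show "((\<lambda>t. ellF k (- t) + ellF k t) has_real_derivative 0) (at x)"
      by (simp add: fk_even)
  qed
  from DERIV_isconst_all[OF this, of t 0] show ?thesis by simp
qed

lemma ellF_less: assumes "s < t" shows "ellF k s < ellF k t"
proof (rule DERIV_pos_imp_increasing[OF assms])
  fix x show "\<exists>y. (ellF k has_real_derivative y) (at x) \<and> y > 0"
    by (intro exI[of _ "fk k x"] conjI ellF_deriv fk_pos)
qed

lemma ellF_le_iff: "ellF k s \<le> ellF k t \<longleftrightarrow> s \<le> t"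
proof
  assume "ellF k s \<le> ellF k t" then show "s \<le> t" using ellF_less[of t s] by (meson leI less_le_not_le)
next
  assume "s \<le> t" then show "ellF k s \<le> ellF k t" using ellF_less[of s t] by (cases "s = t") auto
qed

lemma ellF_inj: "ellF k s = ellF k t \<longleftrightarrow> s = t"
  by (metis ellF_less linorder_neq_iff)

lemma ellF_ge: "0 \<le> t \<Longrightarrow> t \<le> ellF k t"
proof -
  assume t: "0 \<le> t"
  have "(\<lambda>t. ellF k t - t) 0 \<le> (\<lambda>t. ellF k t - t) t"
  proof (rule DERIV_nonneg_imp_nondecreasing[OF t])
    fix x
    show "\<exists>y. ((\<lambda>t. ellF k t - t) has_real_derivative y) (at x) \<and> 0 \<le> y"
    proof (intro exI[of _ "fk k x - 1"] conjI)
      show "((\<lambda>t. ellF k t - t) has_real_derivative fk k x - 1) (at x)"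
        by (rule DERIV_diff[OF ellF_deriv DERIV_ident])
      show "0 \<le> fk k x - 1" using fk_ge1[of x] by simp
    qed
  qed
  then show ?thesis by simp
qed

lemma ellF_surj: "\<exists>t. ellF k t = u"
proof (cases "0 \<le> u")
  case True
  have "\<exists>t. 0 \<le> t \<and> t \<le> u \<and> ellF k t = u"
    by (rule IVT) (use True ellF_ge[OF True] ellF_isCont in auto)
  then show ?thesis by blast
next
  case False
  have "\<exists>t. 0 \<le> t \<and> t \<le> -u \<and> ellF k t = -u"
    by (rule IVT) (use False ellF_ge[of "-u"] ellF_isCont in auto)
  then obtain t where "ellF k t = - u" by blast
  then have "ellF k (-t) = u" by (simp add: ellF_odd)
  then show ?thesis by blast
qed

lemma ellF_jam[simp]: "ellF k (jam k u) = u"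
proof -
  obtain t where t: "ellF k t = u" using ellF_surj by blast
  have "ellF k (THE t. ellF k t = u) = u"
    by (rule theI[of _ t]) (use t ellF_inj in auto)
  then show ?thesis by (simp add: jam_def)
qed

lemma jam_ellF[simp]: "jam k (ellF k t) = t"
  using ellF_jam[of "ellF k t"] by (simp only: ellF_inj)

lemma ellF_nat_shift: "ellF k (t + of_nat m * pi) = ellF k t + of_nat m * ellF k pi"
proof (induction m arbitrary: t)
  case 0 then show ?case by simp
next
  case (Suc m)
  have "ellF k (t + of_nat (Suc m) * pi) = ellF k ((t + of_nat m * pi) + pi)"
    by (simp add: algebra_simps)
  also have "\<dots> = ellF k (t + of_nat m * pi) + ellF k pi" by (rule ellF_shift)
  also have "\<dots> = ellF k t + of_nat m * ellF k pi + ellF k pi" by (simp only: Suc.IH)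
  finally show ?case by (simp add: algebra_simps)
qed

lemma ellF_int_shift: "ellF k (t + of_int n * pi) = ellF k t + of_int n * ellF k pi"
proof (cases "n \<ge> 0")
  case True
  then have n: "real_of_int n = real (nat n)" by simp
  show ?thesis using ellF_nat_shift[of t "nat n"] by (simp only: n)
next
  case False
  then have n: "n = - int (nat (-n))" by simp
  have "ellF k ((t + of_int n * pi) + of_nat (nat (-n)) * pi) = ellF k (t + of_int n * pi) + of_nat (nat (-n)) * ellF k pi"
    by (rule ellF_nat_shift)
  moreover have "(t + of_int n * pi) + of_nat (nat (-n)) * pi = t" using False by simp
  moreover have "real (nat (-n)) = - of_int n" using False by simp
  ultimately show ?thesis by simp
qed

lemma jam_shift: "jam k (u + of_int n * ellF k pi) = jam k u + of_int n * pi"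
proof -
  have "ellF k (jam k u + of_int n * pi) = u + of_int n * ellF k pi"
    by (simp add: ellF_int_shift)
  then show ?thesis by (metis jam_ellF)
qed

lemma jam_isCont: "isCont (jam k) u"
proof -
  have "isCont (jam k) (ellF k (jam k u))"
    by (rule isCont_inverse_function[where d=1]) (simp_all add: ellF_isCont)
  then show ?thesis by simp
qed

lemma jam_deriv: "(jam k has_real_derivative inverse (fk k (jam k u))) (at u)"
proof (rule DERIV_inverse_function[where a="u - 1" and b="u + 1" and f="ellF k"])
  show "(ellF k has_real_derivative fk k (jam k u)) (at (jam k u))" by (rule ellF_deriv)
  show "fk k (jam k u) \<noteq> 0" using fk_pos[of "jam k u"] by simp
  show "isCont (jam k) u" by (rule jam_isCont)
qed auto

lemma ellF_pi_pos: "ellF k pi > 0"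
  using ellF_less[of 0 pi] by simp

lemma ellF_pi_half: "ellF k pi = 2 * ellF k (pi/2)"
proof -
  have "ellF k (-(pi/2) + pi) = ellF k (-(pi/2)) + ellF k pi" by (rule ellF_shift)
  then show ?thesis by (simp add: ellF_odd)
qed

end

lemma deriv_shift_nat:
  fixes F f :: "real \<Rightarrow> real"
  assumes d: "\<And>x. (F has_real_derivative f x) (at x)" and per: "\<And>x. f (x + p) = f x"
  shows "F (x + of_nat m * p) = F x + of_nat m * (F p - F 0)"
proof -
  have H: "F (y + p) - F y = F p - F 0" for y
  proof -
    have "\<forall>z. ((\<lambda>y. F (y + p) - F y) has_real_derivative 0) (at z)"
    proof
      fix z
      have d1: "((\<lambda>y. F (y + p)) has_real_derivative f (z + p) * 1) (at z)"
        by (rule DERIV_chain2[OF d]) (auto intro!: derivative_eq_intros)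
      have "((\<lambda>y. F (y + p) - F y) has_real_derivative f (z + p) * 1 - f z) (at z)"
        by (rule DERIV_diff[OF d1 d])
      then show "((\<lambda>y. F (y + p) - F y) has_real_derivative 0) (at z)" by (simp add: per)
    qed
    from DERIV_isconst_all[OF this, of y 0] show ?thesis by simp
  qed
  show ?thesis
  proof (induction m arbitrary: x)
    case 0 then show ?case by simp
  next
    case (Suc m)
    have "F (x + of_nat (Suc m) * p) = F ((x + of_nat m * p) + p)" by (simp add: algebra_simps)
    also have "\<dots> = F (x + of_nat m * p) + (F p - F 0)" using H[of "x + of_nat m * p"] by simp
    also have "\<dots> = F x + of_nat m * (F p - F 0) + (F p - F 0)" by (simp only: Suc.IH)
    finally show ?case by (simp add: algebra_simps)
  qed
qed

lemma deriv_shift_int: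
  fixes F f :: "real \<Rightarrow> real"
  assumes d: "\<And>x. (F has_real_derivative f x) (at x)" and per: "\<And>x. f (x + p) = f x"
  shows "F (x + of_int n * p) = F x + of_int n * (F p - F 0)"
proof (cases "n \<ge> 0")
  case True
  then have n: "real_of_int n = real (nat n)" by simp
  show ?thesis using deriv_shift_nat[OF d per, of x "nat n"] by (simp only: n)
next
  case False
  have "F ((x + of_int n * p) + of_nat (nat (-n)) * p) = F (x + of_int n * p) + of_nat (nat (-n)) * (F p - F 0)"
    by (rule deriv_shift_nat[OF d per])
  moreover have "(x + of_int n * p) + of_nat (nat (-n)) * p = x" using False by simp
  moreover have "real (nat (-n)) = - of_int n" using False by simp
  ultimately show ?thesis by simp
qed

lemma sin2_shift: "(sin (t + of_int n * pi))\<^sup>2 = (sin t)\<^sup>2"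
proof -
  have "cos (2 * (t + of_int n * pi)) = cos (2 * t + (2 * pi) * of_int n)" by (simp add: algebra_simps)
  also have "\<dots> = cos (2 * t)" by (simp only: cos_add cos_int_2pin sin_int_2pin) simp?
  finally have "cos (2 * (t + of_int n * pi)) = cos (2 * t)" .
  then have "1 - 2 * (sin (t + of_int n * pi))\<^sup>2 = 1 - 2 * (sin t)\<^sup>2" by (simp only: cos_double_sin)
  then show ?thesis by simp
qed

locale tdata =
  fixes x1 x2 x3 a1 a2 c2 :: real
  assumes a12: "a2 < a1" "0 < a2"
begin

definition "b = - x1 - x2 - x3"
definition "c = x1 * x2 + x1 * x3 + x2 * x3"
definition "c1 = - x1 * x2 * x3"
definition "a3 = (c1^2 + c2^2) / (a1 * a2)"
definition "a = (b * c1 + a1 * a3 + a2 * a3 - a1 * a2) / c2"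
definition "k = (a1 - a2) / (a1 + a3)"
definition "s = sqrt (a1 + a3)"
definition "T = tor_T a1 a2 a3"
definition "E x = 2 * exp (tor_v a1 a2 a3 x)"

lemma a3_nonneg: "a3 \<ge> 0"
  unfolding a3_def using a12 by (intro divide_nonneg_pos) auto

lemma k_pos: "k > 0" unfolding k_def using a12 a3_nonneg by (intro divide_pos_pos) auto
lemma k_less1: "k < 1" unfolding k_def using a12 a3_nonneg by (subst divide_less_eq_1_pos) auto
lemma k2: "k\<^sup>2 < 1"
proof -
  have "k\<^sup>2 = k * k" by (simp add: power2_eq_square)
  also have "\<dots> < 1 * 1" using k_pos k_less1 by (intro mult_strict_mono) auto
  finally show ?thesis by simp
qed

lemma s_pos: "s > 0" unfolding s_def using a12 a3_nonneg by simp

lemma T_eq: "T = ellF k pi / s"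
  unfolding T_def tor_T_def k_def[symmetric] s_def[symmetric] using ellF_pi_half[OF k2] by simp

lemma T_pos: "T > 0" unfolding T_eq using ellF_pi_pos[OF k2] s_pos by simp

lemma E_eq: "E x = a1 - (a1 - a2) * (sin (jam k (x * s)))\<^sup>2"
proof -
  define q where "q = (sin (jam k (x * s)))\<^sup>2"
  have q1: "q \<le> 1" unfolding q_def by (metis abs_sin_le_one abs_ge_zero power2_abs power_le_one)
  have e1: "a1 * (1 - (a1 - a2) / a1 * q) = a1 - (a1 - a2) * q" using a12 by (simp add: field_simps)
  moreover have "(a1 - a2) * (1 - q) \<ge> 0" using q1 a12 by simp
  then have "a1 - (a1 - a2) * q \<ge> a2" by (simp add: algebra_simps)
  ultimately have pos: "a1 * (1 - (a1 - a2) / a1 * q) / 2 > 0" using a12 by simp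
  have "E x = 2 * (a1 * (1 - (a1 - a2) / a1 * q) / 2)"
    unfolding E_def tor_v_def jsn_def k_def[symmetric] s_def[symmetric] q_def[symmetric]
    using pos by simp
  then show ?thesis using e1 by (simp add: q_def)
qed

lemma E_bounds: "a2 \<le> E x" "E x \<le> a1"
proof -
  define q where "q = (sin (jam k (x * s)))\<^sup>2"
  have q1: "q \<le> 1" unfolding q_def by (metis abs_sin_le_one abs_ge_zero power2_abs power_le_one)
  have q0: "q \<ge> 0" unfolding q_def by simp
  have "(a1 - a2) * (1 - q) \<ge> 0" using q1 a12 by simp
  then show "a2 \<le> E x" unfolding E_eq q_def[symmetric] by (simp add: algebra_simps)
  show "E x \<le> a1" unfolding E_eq q_def[symmetric] using q0 a12 by simp
qed

lemma E_0: "E 0 = a1"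
  unfolding E_eq by (simp add: jam_ellF[OF k2, of 0, simplified ellF_0[OF k2]])

lemma E_shift: "E (x + of_int n * T) = E x"
proof -
  have "(x + of_int n * T) * s = x * s + of_int n * ellF k pi"
    unfolding T_eq using s_pos by (simp add: field_simps)
  then show ?thesis unfolding E_eq by (simp add: jam_shift[OF k2] sin2_shift)
qed

lemma E_shift1: "E (x + T) = E x"
  using E_shift[of x 1] by simp

lemma E_at: "E (ellF k t / s) = a1 - (a1 - a2) * (sin t)\<^sup>2"
  unfolding E_eq using s_pos by (simp add: jam_ellF[OF k2])

lemma E_eq_a1: assumes "E y = a1" shows "\<exists>n::int. y = of_int n * T"
proof -
  have "(a1 - a2) * (sin (jam k (y * s)))\<^sup>2 = 0" using assms unfolding E_eq by simp
  then have "sin (jam k (y * s)) = 0" using a12 by simp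
  then obtain n :: int where n: "jam k (y * s) = of_int n * pi" using sin_zero_iff_int2 by blast
  have "y * s = ellF k (jam k (y * s))" by (simp add: ellF_jam[OF k2])
  also have "\<dots> = ellF k (0 + of_int n * pi)" using n by simp
  also have "\<dots> = of_int n * ellF k pi" using ellF_int_shift[OF k2, of 0 n] by (simp add: ellF_0[OF k2])
  finally have "y = of_int n * T" unfolding T_eq using s_pos by (simp add: field_simps)
  then show ?thesis by blast
qed

lemma jam_s_deriv: "((\<lambda>x. jam k (x * s)) has_real_derivative inverse (fk k (jam k (x * s))) * s) (at x)"
  by (rule DERIV_chain2[OF jam_deriv[OF k2]]) (auto intro!: derivative_eq_intros)

lemma E_isCont: "isCont E x"
proof -
  have "isCont (\<lambda>x. jam k (x * s)) x" using jam_s_deriv DERIV_isCont by blast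
  then have "isCont (\<lambda>x. a1 - (a1 - a2) * (sin (jam k (x * s)))\<^sup>2) x"
    by (intro continuous_intros) auto
  then show ?thesis unfolding E_eq[abs_def] by simp
qed

lemma E_cont: "continuous_on S E"
  using E_isCont continuous_at_imp_continuous_on by blast

definition "lamf t = (a1 - (a1 - a2) * (sin t)\<^sup>2) * fk k t"
definition "Lam = sint lamf"
definition "Phi x = Lam (jam k (x * s)) / s"

lemma lamf_cont: "continuous_on UNIV lamf"
  unfolding lamf_def by (intro continuous_intros fk_cont[OF k2])

lemma Lam_deriv: "(Lam has_real_derivative lamf t) (at t)"
  unfolding Lam_def by (rule sint_deriv[OF lamf_cont])

lemma Phi_deriv: "(Phi has_real_derivative E x) (at x)"
proof -
  have d: "((\<lambda>x. Lam (jam k (x * s))) has_real_derivative lamf (jam k (x * s)) * (inverse (fk k (jam k (x * s))) * s)) (at x)"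
    by (rule DERIV_chain2[OF Lam_deriv jam_s_deriv])
  have "lamf (jam k (x * s)) * (inverse (fk k (jam k (x * s))) * s) / s = E x"
    unfolding lamf_def E_eq using s_pos fk_pos[OF k2, of "jam k (x * s)"] by (simp add: field_simps)
  moreover have "((\<lambda>x. Lam (jam k (x * s)) / s) has_real_derivative lamf (jam k (x * s)) * (inverse (fk k (jam k (x * s))) * s) / s) (at x)"
    by (rule DERIV_cdivide[OF d])
  ultimately show ?thesis unfolding Phi_def[abs_def] by simp
qed

lemma Phi_0: "Phi 0 = 0"
  unfolding Phi_def Lam_def using jam_ellF[OF k2, of 0] by (simp add: ellF_0[OF k2])

lemma Phi_shift: "Phi (x + of_int n * T) = Phi x + of_int n * Phi T"
  using deriv_shift_int[OF Phi_deriv E_shift1, of x n] Phi_0 by simp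

lemma Phi_T: "Phi T = Lam pi / s"
proof -
  have "T * s = ellF k pi" unfolding T_eq using s_pos by simp
  then show ?thesis unfolding Phi_def by (simp add: jam_ellF[OF k2])
qed

lemma Lam_pi: "Lam pi > pi * (a1 + a2) / 2"
proof -
  define D where "D t = Lam t - (a1 * t - (a1 - a2) * (t / 2 - sin (2 * t) / 4))" for t
  have dD: "(D has_real_derivative (a1 - (a1 - a2) * (sin t)\<^sup>2) * (fk k t - 1)) (at t)" for t
  proof -
    have d2: "((\<lambda>t. a1 * t - (a1 - a2) * (t / 2 - sin (2 * t) / 4)) has_real_derivative (a1 * 1 - (a1 - a2) * (1 / 2 - cos (2 * t) * (2 * 1) / 4))) (at t)"
      by (auto intro!: derivative_eq_intros)
    have "(D has_real_derivative lamf t - (a1 * 1 - (a1 - a2) * (1 / 2 - cos (2 * t) * (2 * 1) / 4))) (at t)"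
      unfolding D_def[abs_def] by (rule DERIV_diff[OF Lam_deriv d2])
    moreover have "lamf t - (a1 * 1 - (a1 - a2) * (1 / 2 - cos (2 * t) * (2 * 1) / 4)) = (a1 - (a1 - a2) * (sin t)\<^sup>2) * (fk k t - 1)"
      unfolding lamf_def cos_double_sin by (simp add: field_simps)
    ultimately show ?thesis by simp
  qed
  have "D 0 < D pi"
  proof (rule DERIV_pos_imp_increasing_open[of 0 pi D])
    show "0 < pi" by simp
    fix t assume t: "0 < t" "t < pi"
    have "sin t > 0" using t sin_gt_zero by blast
    then have "fk k t > 1" using fk_gt1[OF k2] k_pos by auto
    moreover have "(sin t)\<^sup>2 \<le> 1" by (metis abs_sin_le_one abs_ge_zero power2_abs power_le_one)
    then have "(a1 - a2) * (1 - (sin t)\<^sup>2) \<ge> 0" using a12 by simp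
    then have "a1 - (a1 - a2) * (sin t)\<^sup>2 \<ge> a2" by (simp add: algebra_simps)
    ultimately have "(a1 - (a1 - a2) * (sin t)\<^sup>2) * (fk k t - 1) > 0" using a12 by simp
    then show "\<exists>y. (D has_real_derivative y) (at t) \<and> 0 < y" using dD by blast
  next
    show "continuous_on {0..pi} D"
      using dD DERIV_isCont continuous_at_imp_continuous_on by blast
  qed
  moreover have "D 0 = 0" unfolding D_def Lam_def by simp
  moreover have "D pi = Lam pi - pi * (a1 + a2) / 2" unfolding D_def by (simp add: field_simps)
  ultimately show ?thesis by simp
qed

lemma Phi_T_bound: "2 * pi * Phi T > pi\<^sup>2 * (a1 + a2) / s"
proof -
  have "2 * pi * Phi T = 2 * pi * Lam pi / s" by (simp add: Phi_T)
  also have "\<dots> > 2 * pi * (pi * (a1 + a2) / 2) / s"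
    using Lam_pi s_pos by (intro divide_strict_right_mono mult_strict_left_mono) auto
  finally show ?thesis by (simp add: power2_eq_square)
qed

end

context tdata
begin

definition "P = a1^3 * a2^2 + a1^2 * a2^3 + (a1^2 * a2 + a1 * a2^2) * b * c1
               + (a1^2 + a2^2) * c1^2 + 2 * a1^2 * a2^2 * c"
definition "R = (a1 + a2) * c1^2 - a1^2 * a2^2 + a1 * a2 * b * c1"
definition "W e = (e + x2 * x3) * (e + x1 * x3) * (e + x1 * x2)"
definition "Nf e = c2 - a * e / 2"

lemma quartic_id:
  assumes "c2 \<noteq> 0"
  shows "(a1 - a2)^2 * c2^4 + 2 * P * c2^2 + R^2 = 4 * a1^2 * a2^2 * c2^2 * (c + a^2 / 4 - a3 + a1 + a2)"
proof -
  have ac: "a * c2 = b * c1 + a1 * a3 + a2 * a3 - a1 * a2" unfolding a_def using assms by simp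
  have a3e: "a1 * a2 * a3 = c1^2 + c2^2" unfolding a3_def using a12 by simp
  have ac2: "a1 * a2 * (a * c2) = a1 * a2 * b * c1 + (a1 + a2) * (c1^2 + c2^2) - a1^2 * a2^2"
    unfolding ac using a3e by (simp add: algebra_simps power2_eq_square)
  have "4 * a1^2 * a2^2 * c2^2 * (c + a^2 / 4 - a3 + a1 + a2)
     = 4 * a1^2 * a2^2 * c2^2 * c + (a1 * a2 * (a * c2))^2 - 4 * a1 * a2 * c2^2 * (a1 * a2 * a3)
       + 4 * a1^2 * a2^2 * c2^2 * (a1 + a2)"
    by (simp add: algebra_simps power2_eq_square)
  also have "\<dots> = 4 * a1^2 * a2^2 * c2^2 * c + (a1 * a2 * b * c1 + (a1 + a2) * (c1^2 + c2^2) - a1^2 * a2^2)^2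
       - 4 * a1 * a2 * c2^2 * (c1^2 + c2^2) + 4 * a1^2 * a2^2 * c2^2 * (a1 + a2)"
    by (simp only: ac2 a3e)
  also have "\<dots> = (a1 - a2)^2 * c2^4 + 2 * P * c2^2 + R^2"
    unfolding P_def R_def by algebra
  finally show ?thesis by simp
qed

lemma K_zero:
  assumes "c2 \<noteq> 0" "(a1 - a2)^2 * c2^4 + 2 * P * c2^2 + R^2 = 0"
  shows "c + a^2 / 4 = a3 - a1 - a2"
proof -
  have "4 * a1^2 * a2^2 * c2^2 * (c + a^2 / 4 - a3 + a1 + a2) = 0"
    using quartic_id[OF assms(1)] assms(2) by simp
  then show ?thesis using a12 assms(1) by simp
qed

lemma W_identity:
  assumes "c2 \<noteq> 0" "(a1 - a2)^2 * c2^4 + 2 * P * c2^2 + R^2 = 0"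
  shows "W e + (Nf e)^2 = (e - a1) * (e - a2) * (e + a3)"
proof -
  have K1: "c + a^2 / 4 - (a3 - a1 - a2) = 0" using K_zero[OF assms] by simp
  have K2: "b * c1 - a * c2 - (a1 * a2 - (a1 + a2) * a3) = 0" unfolding a_def using assms(1) by (simp add: field_simps)
  have K3: "c1^2 + c2^2 - a1 * a2 * a3 = 0" unfolding a3_def using a12 by simp
  have "W e + (Nf e)^2 - (e - a1) * (e - a2) * (e + a3)
      = e^2 * (c + a^2 / 4 - (a3 - a1 - a2)) + e * (b * c1 - a * c2 - (a1 * a2 - (a1 + a2) * a3))
        + (c1^2 + c2^2 - a1 * a2 * a3)"
    unfolding W_def Nf_def b_def c_def c1_def by (simp add: field_simps power2_eq_square power3_eq_cube)
  then show ?thesis using K1 K2 K3 by simp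
qed

lemma rhs_nonpos: "a2 \<le> e \<Longrightarrow> e \<le> a1 \<Longrightarrow> (e - a1) * (e - a2) * (e + a3) \<le> 0"
  using a3_nonneg a12 by (intro mult_nonpos_nonneg mult_nonpos_nonneg) (auto simp: mult_nonpos_nonneg mult_le_0_iff)

lemma rhs_zero_iff: "(e - a1) * (e - a2) * (e + a3) = 0 \<Longrightarrow> a2 \<le> e \<Longrightarrow> e = a1 \<or> e = a2"
  using a3_nonneg a12 by auto

end

lemma negligible_range_int:
  fixes f :: "int \<Rightarrow> real"
  assumes "Z \<subseteq> range f"
  shows "negligible Z"
proof -
  have "negligible (\<Union> ((\<lambda>n. {f n}) ` UNIV))"
    by (rule negligible_countable_Union) auto
  moreover have "Z \<subseteq> \<Union> ((\<lambda>n. {f n}) ` UNIV)" using assms by auto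
  ultimately show ?thesis using negligible_subset by blast
qed

lemma sint_const_ae:
  assumes Z: "negligible Z" and g: "\<And>z. z \<notin> Z \<Longrightarrow> g z = C"
  shows "sint g y = C * y"
proof -
  have "integral S g = integral S (\<lambda>_. C)" for S
    by (rule integral_spike[OF Z]) (use g in auto)
  then show ?thesis by (simp add: sint_def)
qed

lemma sint_zero: "sint (\<lambda>_. 0::real) y = 0"
  by (simp add: sint_def)

context tdata
begin

lemma expv: "exp (tor_v a1 a2 a3 z) = E z / 2" by (simp add: E_def)

lemma G_shift_gen:
  assumes root: "(a1 - a2)^2 * c2^4 + 2 * P * c2^2 + R^2 = 0"
    and rootW: "W (- p) = 0" and xp: "xi * p = - c1"
  shows "xi * sint (\<lambda>z. (c2 - a * exp (tor_v a1 a2 a3 z)) / (2 * xi * exp (tor_v a1 a2 a3 z) - c1)) (x + of_int n * T)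
       = xi * sint (\<lambda>z. (c2 - a * exp (tor_v a1 a2 a3 z)) / (2 * xi * exp (tor_v a1 a2 a3 z) - c1)) x
         + of_int n * (xi * sint (\<lambda>z. (c2 - a * exp (tor_v a1 a2 a3 z)) / (2 * xi * exp (tor_v a1 a2 a3 z) - c1)) T)"
proof -
  define g where "g z = (c2 - a * exp (tor_v a1 a2 a3 z)) / (2 * xi * exp (tor_v a1 a2 a3 z) - c1)" for z
  have g_eq: "g z = Nf (E z) / (xi * (E z + p))" for z
    unfolding g_def expv Nf_def using xp by (simp add: algebra_simps)
  have g_per: "g (z + T) = g z" for z unfolding g_eq E_shift1 ..
  have main: "sint g (x + of_int n * T) = sint g x + of_int n * sint g T"
  proof (cases "c2 = 0 \<or> xi = 0")
    case True
    then have "g = (\<lambda>_. 0)"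
    proof
      assume "c2 = 0"
      then have "a = 0" unfolding a_def by simp
      then show ?thesis using \<open>c2 = 0\<close> unfolding g_def[abs_def] by simp
    next
      assume "xi = 0"
      then have "c1 = 0" using xp by simp
      then show ?thesis using \<open>xi = 0\<close> unfolding g_def[abs_def] by simp
    qed
    then show ?thesis by (simp add: sint_zero)
  next
    case False
    then have c2: "c2 \<noteq> 0" and xi: "xi \<noteq> 0" by auto
    show ?thesis
    proof (cases "\<forall>z. E z + p \<noteq> 0")
      case True
      have "isCont g z" for z
        unfolding g_eq[abs_def] Nf_def using True xi
        by (intro continuous_intros E_isCont) auto
      then have "continuous_on UNIV g" using continuous_at_imp_continuous_on by blast
      from deriv_shift_int[OF sint_deriv[OF this] g_per, of x n] show ?thesis by simp
    next
      case False
      then obtain z0 where z0: "E z0 + p = 0" by blast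
      define E0 where "E0 = E z0"
      have p: "p = - E0" using z0 E0_def by simp
      have WE0: "W E0 = 0" using rootW p by simp
      have id: "W E0 + (Nf E0)^2 = (E0 - a1) * (E0 - a2) * (E0 + a3)"
        by (rule W_identity[OF c2 root])
      have rng: "a2 \<le> E0" "E0 \<le> a1" unfolding E0_def using E_bounds by auto
      have rn: "(E0 - a1) * (E0 - a2) * (E0 + a3) \<le> 0" by (rule rhs_nonpos[OF rng])
      have sq: "(Nf E0)^2 \<ge> 0" by simp
      have N2: "(Nf E0)^2 = (E0 - a1) * (E0 - a2) * (E0 + a3)" using id WE0 by simp
      have "(Nf E0)^2 = 0" using N2 rn sq by linarith
      then have N0: "Nf E0 = 0" by simp
      have r0: "(E0 - a1) * (E0 - a2) * (E0 + a3) = 0" using id WE0 N0 by simp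
      have E0c: "E0 = a1 \<or> E0 = a2" by (rule rhs_zero_iff[OF r0 rng(1)])
      define C where "C = - a / (2 * xi)"
      have gC: "g z = C" if "E z \<noteq> E0" for z
      proof -
        have "Nf (E z) = Nf (E z) - Nf E0" using N0 by simp
        also have "\<dots> = - a * (E z - E0) / 2" unfolding Nf_def by (simp add: algebra_simps)
        finally have "g z = (- a * (E z - E0) / 2) / (xi * (E z - E0))" unfolding g_eq p by simp
        moreover have ne: "E z - E0 \<noteq> 0" using that by simp
        have "(- a * (E z - E0) / 2) / (xi * (E z - E0)) = - a / (2 * xi)"
          using ne xi by (simp add: field_simps)
        ultimately show ?thesis unfolding C_def by simp
      qed
      define Z where "Z = {z. E z = E0}"
      have negZ: "negligible Z"
        using E0c
      proof
        assume "E0 = a1"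
        have "Z \<subseteq> range (\<lambda>n::int. of_int n * T)"
          unfolding Z_def \<open>E0 = a1\<close> using E_eq_a1 by blast
        then show ?thesis by (rule negligible_range_int)
      next
        assume "E0 = a2"
        have "Z \<subseteq> range (\<lambda>i::int. ellF k (of_int i * (pi / 2)) / s)"
        proof
          fix z assume "z \<in> Z"
          then have "E z = a2" unfolding Z_def \<open>E0 = a2\<close> by simp
          then have "(a1 - a2) * (1 - (sin (jam k (z * s)))\<^sup>2) = 0" unfolding E_eq by (simp add: algebra_simps)
          then have "(sin (jam k (z * s)))\<^sup>2 = 1" using a12 by simp
          then have "(cos (jam k (z * s)))\<^sup>2 = 0" using sin_cos_squared_add[of "jam k (z * s)"] by simp
          then have "cos (jam k (z * s)) = 0" by simp
          then obtain i where i: "jam k (z * s) = of_int i * (pi / 2)" using cos_zero_iff_int by blast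
          have "z * s = ellF k (jam k (z * s))" by (simp add: ellF_jam[OF k2])
          then have "z = ellF k (of_int i * (pi / 2)) / s" using i s_pos by (simp add: field_simps)
          then show "z \<in> range (\<lambda>i::int. ellF k (of_int i * (pi / 2)) / s)" by blast
        qed
        then show ?thesis by (rule negligible_range_int)
      qed
      have "sint g y = C * y" for y
        by (rule sint_const_ae[OF negZ]) (use gC Z_def in auto)
      then show ?thesis by (simp add: algebra_simps)
    qed
  qed
  show ?thesis using main unfolding g_def[abs_def] by (simp add: algebra_simps)
qed

end

lemma pair_alg:
  fixes r q p1 p2 :: real
  assumes "(r + p1)\<^sup>2 * (q + p2)\<^sup>2 = (q + p1)\<^sup>2 * (r + p2)\<^sup>2"
  shows "(r - q) * (p2 - p1) = 0 \<or> 2 * r * q + (r + q) * (p1 + p2) + 2 * p1 * p2 = 0"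
proof -
  define X where "X = (r + p1) * (q + p2)"
  define Y where "Y = (q + p1) * (r + p2)"
  have "X\<^sup>2 = Y\<^sup>2" using assms unfolding X_def Y_def by (simp add: power_mult_distrib)
  then have "X = Y \<or> X = - Y" using power2_eq_iff by blast
  then show ?thesis
  proof
    assume "X = Y" then have "X - Y = 0" by simp
    then show ?thesis unfolding X_def Y_def by (simp add: algebra_simps)
  next
    assume "X = - Y" then have "X + Y = 0" by simp
    then show ?thesis unfolding X_def Y_def by (simp add: algebra_simps)
  qed
qed

lemma core_distinct:
  fixes r q p1 p2 p3 :: real
  assumes h12: "(r + p1)\<^sup>2 * (q + p2)\<^sup>2 = (q + p1)\<^sup>2 * (r + p2)\<^sup>2"
    and h13: "(r + p1)\<^sup>2 * (q + p3)\<^sup>2 = (q + p1)\<^sup>2 * (r + p3)\<^sup>2"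
    and h23: "(r + p2)\<^sup>2 * (q + p3)\<^sup>2 = (q + p2)\<^sup>2 * (r + p3)\<^sup>2"
    and d: "p1 \<noteq> p2" "p1 \<noteq> p3" "p2 \<noteq> p3"
  shows "r = q"
proof (rule ccontr)
  assume ne: "r \<noteq> q"
  have A: "2 * r * q + (r + q) * (p1 + p2) + 2 * p1 * p2 = 0" proof -
    have "(r - q) * (p2 - p1) \<noteq> 0" using ne d by simp
    then show ?thesis using pair_alg[OF h12] by blast
  qed
  have B: "2 * r * q + (r + q) * (p1 + p3) + 2 * p1 * p3 = 0" proof -
    have "(r - q) * (p3 - p1) \<noteq> 0" using ne d by simp
    then show ?thesis using pair_alg[OF h13] by blast
  qed
  have C: "2 * r * q + (r + q) * (p2 + p3) + 2 * p2 * p3 = 0" proof -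
    have "(r - q) * (p3 - p2) \<noteq> 0" using ne d by simp
    then show ?thesis using pair_alg[OF h23] by blast
  qed
  have "(r + q + 2 * p1) * (p2 - p3) = 0" using A B by (simp add: algebra_simps)
  then have e1: "r + q + 2 * p1 = 0" using d by simp
  have "(r + q + 2 * p2) * (p1 - p3) = 0" using A C by (simp add: algebra_simps)
  then have e2: "r + q + 2 * p2 = 0" using d by simp
  from e1 e2 d show False by simp
qed

lemma core_degen:
  fixes r q pk :: real
  assumes h: "r\<^sup>2 * (q + pk)\<^sup>2 = q\<^sup>2 * (r + pk)\<^sup>2"
    and q: "q > 0" and r: "0 < r" "r \<le> q" and W: "q + pk \<le> 0"
  shows "r = q"
proof -
  have "(r - q) * (pk - 0) = 0 \<or> 2 * r * q + (r + q) * (0 + pk) + 2 * 0 * pk = 0"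
    using pair_alg[of r 0 q pk] h by simp
  then show ?thesis
  proof
    assume "(r - q) * (pk - 0) = 0"
    moreover have "pk \<noteq> 0" using q W by auto
    ultimately show ?thesis by simp
  next
    assume e: "2 * r * q + (r + q) * (0 + pk) + 2 * 0 * pk = 0"
    have "(r + q) * pk \<le> (r + q) * (- q)" using W r q by (intro mult_left_mono) auto
    then have "2 * r * q \<ge> (r + q) * q" using e by (simp add: algebra_simps)
    then have "r * q \<ge> q * q" by (simp add: algebra_simps)
    then have "r \<ge> q" using q by simp
    then show ?thesis using r by simp
  qed
qed

lemma exp_i_shift:
  "exp (\<i> * complex_of_real (u + 2 * pi * of_int m)) = exp (\<i> * complex_of_real u)"
  unfolding exp_eq by (intro exI[of _ m]) (simp add: algebra_simps)

locale tdata2 = tdata +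
  assumes dist: "x1 \<noteq> x2" "x1 \<noteq> x3" "x2 \<noteq> x3"
    and root: "(a1 - a2)^2 * c2^4 + 2 * P * c2^2 + R^2 = 0"
begin

abbreviation "al \<equiv> alp x1 x2 x3"
definition "pp i = al (i + 1) * al (i + 2)"
definition "dd i = (al i - al (i + 1)) * (al i - al (i + 2))"
definition "Gi i x = tor_G x1 x2 x3 a1 a2 a3 c1 c2 a i x"
definition "Fi i x = tor_F x1 x2 x3 a1 a2 a3 i x"
definition "th i = Gi i T"
definition "Psi = tor_psi x1 x2 x3 a1 a2 a3 c1 c2 a"

lemma al_simps[simp]: "al 1 = x1" "al 2 = x2" "al 3 = x3" "al 4 = x1" "al 5 = x2"
  by (simp_all add: alp_def)

lemma pp_simps: "pp 1 = x2 * x3" "pp 2 = x1 * x3" "pp 3 = x1 * x2"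
  by (simp_all add: pp_def alp_def)

lemma dd_nz: "i \<in> {1,2,3} \<Longrightarrow> dd i \<noteq> 0"
  using dist by (auto simp: dd_def alp_def)

lemma Fi_eq: "Fi i x = sqrt ((E x + pp i) / dd i)"
  unfolding Fi_def tor_F_def pp_def dd_def E_def Let_def by simp

lemma Fi_shift: "Fi i (x + of_int n * T) = Fi i x"
  unfolding Fi_eq E_shift ..

lemma W_pp: "i \<in> {1,2,3} \<Longrightarrow> W (- pp i) = 0"
  by (auto simp: W_def pp_def alp_def algebra_simps)

lemma xpp: "i \<in> {1,2,3} \<Longrightarrow> al i * pp i = - c1"
  by (auto simp: pp_def alp_def c1_def algebra_simps)

lemma Gi_shift: assumes "i \<in> {1,2,3}" shows "Gi i (x + of_int n * T) = Gi i x + of_int n * th i"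
  unfolding Gi_def th_def tor_G_def Let_def
  by (rule G_shift_gen[OF root W_pp[OF assms] xpp[OF assms]])

lemma Psi_eq: "Psi i x y = complex_of_real (Fi i x) * exp (\<i> * complex_of_real (Gi i x + al i * y))"
  unfolding Psi_def tor_psi_def Fi_def Gi_def ..

lemma abs_Fi_sq: "i \<in> {1,2,3} \<Longrightarrow> \<bar>Fi i x\<bar>\<^sup>2 = \<bar>E x + pp i\<bar> / \<bar>dd i\<bar>"
  unfolding Fi_eq real_sqrt_abs'[symmetric] by (simp add: abs_divide)

end

lemma exp_split: "exp (\<i> * complex_of_real (u + v)) = exp (\<i> * complex_of_real u) * exp (\<i> * complex_of_real v)"
  by (simp add: distrib_left exp_add)

lemma exp_i_eq_real:
  assumes "exp (\<i> * complex_of_real A) = exp (\<i> * complex_of_real B)"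
  shows "\<exists>m::int. A = B + 2 * pi * of_int m"
proof -
  obtain n :: int where n: "\<i> * complex_of_real A = \<i> * complex_of_real B + complex_of_real (real_of_int (2 * n) * pi) * \<i>"
    using assms unfolding exp_eq by auto
  have "Im (\<i> * complex_of_real A) = Im (\<i> * complex_of_real B + complex_of_real (real_of_int (2 * n) * pi) * \<i>)"
    using n by simp
  then have "A = B + 2 * pi * of_int n" by simp
  then show ?thesis by blast
qed

lemma pair_from_abs:
  fixes r q pi pj L :: real
  assumes "\<bar>r + pi\<bar> = L * \<bar>q + pi\<bar>" "\<bar>r + pj\<bar> = L * \<bar>q + pj\<bar>"
  shows "(r + pi)\<^sup>2 * (q + pj)\<^sup>2 = (q + pi)\<^sup>2 * (r + pj)\<^sup>2"
proof -
  have "(r + pi)\<^sup>2 * (q + pj)\<^sup>2 = (\<bar>r + pi\<bar> * \<bar>q + pj\<bar>)\<^sup>2" by (simp add: power_mult_distrib)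
  also have "\<dots> = (\<bar>q + pi\<bar> * \<bar>r + pj\<bar>)\<^sup>2" using assms by (simp add: algebra_simps)
  also have "\<dots> = (q + pi)\<^sup>2 * (r + pj)\<^sup>2" by (simp add: power_mult_distrib)
  finally show ?thesis .
qed

context tdata2
begin

lemma norm_Psi: "norm (Psi i x y) = \<bar>Fi i x\<bar>"
  unfolding Psi_eq by (simp add: norm_mult)

lemma c2_nz_degen: assumes "x1 = 0 \<or> x2 = 0 \<or> x3 = 0" shows "c2 \<noteq> 0"
proof
  assume c2: "c2 = 0"
  have "c1 = 0" using assms by (auto simp: c1_def)
  then have "R = - (a1^2 * a2^2)" by (simp add: R_def)
  moreover have "R^2 = 0" using root c2 by simp
  ultimately show False using a12 by simp
qed

lemma W_a1_nonpos: assumes "c2 \<noteq> 0" shows "W a1 \<le> 0"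
proof -
  have "W a1 + (Nf a1)^2 = 0" using W_identity[OF assms root, of a1] by simp
  moreover have "(Nf a1)^2 \<ge> 0" by simp
  ultimately show ?thesis by linarith
qed

lemma E_sigma:
  assumes h: "\<And>i. i \<in> {1,2,3} \<Longrightarrow> \<bar>E \<sigma> + pp i\<bar> = L * \<bar>a1 + pp i\<bar>"
  shows "E \<sigma> = a1"
proof -
  define r where "r = E \<sigma>"
  have hp: "(r + pp i)\<^sup>2 * (a1 + pp j)\<^sup>2 = (a1 + pp i)\<^sup>2 * (r + pp j)\<^sup>2" if "i \<in> {1,2,3}" "j \<in> {1,2,3}" for i j
    by (rule pair_from_abs) (use h that r_def in auto)
  have rb: "a2 \<le> r" "r \<le> a1" unfolding r_def using E_bounds by auto
  have p1: "pp 1 = x2 * x3" and p2: "pp 2 = x1 * x3" and p3: "pp 3 = x1 * x2" by (rule pp_simps)+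
  show ?thesis
  proof (cases "x1 = 0 \<or> x2 = 0 \<or> x3 = 0")
    case False
    have d: "pp 1 \<noteq> pp 2" "pp 1 \<noteq> pp 3" "pp 2 \<noteq> pp 3" using False dist unfolding p1 p2 p3 by auto
    show ?thesis
      using core_distinct[OF hp[of 1 2] hp[of 1 3] hp[of 2 3] d] r_def by simp
  next
    case True
    have c2: "c2 \<noteq> 0" by (rule c2_nz_degen[OF True])
    have Wa: "W a1 \<le> 0" by (rule W_a1_nonpos[OF c2])
    have a1p: "a1 > 0" using a12 by simp
    have rpos: "0 < r" using rb a12 by simp
    from True show ?thesis
    proof (elim disjE)
      assume x: "x1 = 0"
      have "W a1 = a1 * a1 * (a1 + x2 * x3)" unfolding W_def using x by (simp add: algebra_simps)
      then have "a1 * a1 * (a1 + x2 * x3) \<le> 0" using Wa by simp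
      then have w: "a1 + x2 * x3 \<le> 0" using a1p by (simp add: mult_le_0_iff)
      have "r\<^sup>2 * (a1 + x2 * x3)\<^sup>2 = a1\<^sup>2 * (r + x2 * x3)\<^sup>2"
      proof -
        have "(r + pp 2)\<^sup>2 * (a1 + pp 1)\<^sup>2 = (a1 + pp 2)\<^sup>2 * (r + pp 1)\<^sup>2" by (rule hp) auto
        then show ?thesis unfolding p1 p2 using x by simp
      qed
      from core_degen[OF this a1p rpos rb(2) w] show ?thesis using r_def by simp
    next
      assume x: "x2 = 0"
      have "W a1 = a1 * a1 * (a1 + x1 * x3)" unfolding W_def using x by (simp add: algebra_simps)
      then have "a1 * a1 * (a1 + x1 * x3) \<le> 0" using Wa by simp
      then have w: "a1 + x1 * x3 \<le> 0" using a1p by (simp add: mult_le_0_iff)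
      have "r\<^sup>2 * (a1 + x1 * x3)\<^sup>2 = a1\<^sup>2 * (r + x1 * x3)\<^sup>2"
      proof -
        have "(r + pp 1)\<^sup>2 * (a1 + pp 2)\<^sup>2 = (a1 + pp 1)\<^sup>2 * (r + pp 2)\<^sup>2" by (rule hp) auto
        then show ?thesis unfolding p1 p2 using x by simp
      qed
      from core_degen[OF this a1p rpos rb(2) w] show ?thesis using r_def by simp
    next
      assume x: "x3 = 0"
      have "W a1 = a1 * a1 * (a1 + x1 * x2)" unfolding W_def using x by (simp add: algebra_simps)
      then have "a1 * a1 * (a1 + x1 * x2) \<le> 0" using Wa by simp
      then have w: "a1 + x1 * x2 \<le> 0" using a1p by (simp add: mult_le_0_iff)
      have "r\<^sup>2 * (a1 + x1 * x2)\<^sup>2 = a1\<^sup>2 * (r + x1 * x2)\<^sup>2"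
      proof -
        have "(r + pp 1)\<^sup>2 * (a1 + pp 3)\<^sup>2 = (a1 + pp 1)\<^sup>2 * (r + pp 3)\<^sup>2" by (rule hp) auto
        then show ?thesis unfolding p1 p3 using x by simp
      qed
      from core_degen[OF this a1p rpos rb(2) w] show ?thesis using r_def by simp
    qed
  qed
qed

lemma period_fst:
  assumes "w \<in> period_lattice Psi"
  shows "\<exists>n::int. fst w = of_int n * T"
proof -
  obtain l :: complex where l: "l \<noteq> 0" and hl: "\<forall>i\<in>{1,2,3}. Psi i (0 + fst w) (0 + snd w) = l * Psi i 0 0"
    using assms unfolding period_lattice_def by blast
  define L where "L = (norm l)\<^sup>2"
  have "\<bar>E (fst w) + pp i\<bar> = L * \<bar>a1 + pp i\<bar>" if i: "i \<in> {1,2,3}" for i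
  proof -
    have "Psi i (0 + fst w) (0 + snd w) = l * Psi i 0 0" by (rule bspec[OF hl i])
    then have "norm (Psi i (fst w) (snd w)) = norm l * norm (Psi i 0 0)" by (simp add: norm_mult)
    then have "\<bar>Fi i (fst w)\<bar> = norm l * \<bar>Fi i 0\<bar>" by (simp add: norm_Psi)
    then have "\<bar>Fi i (fst w)\<bar>\<^sup>2 = L * \<bar>Fi i 0\<bar>\<^sup>2" unfolding L_def by (simp add: power_mult_distrib)
    then have "\<bar>E (fst w) + pp i\<bar> / \<bar>dd i\<bar> = L * (\<bar>E 0 + pp i\<bar> / \<bar>dd i\<bar>)"
      by (simp only: abs_Fi_sq[OF i])
    then show ?thesis using dd_nz[OF i] E_0 by (simp add: field_simps)
  qed
  then have "E (fst w) = a1" by (rule E_sigma)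
  then show ?thesis by (rule E_eq_a1)
qed

lemma exists_x0: "\<exists>x0. \<forall>i\<in>{1,2,3}. Fi i x0 \<noteq> 0"
proof -
  define v where "v = [a1, a1 - (a1 - a2) / 4, a1 - (a1 - a2) / 2, a2]"
  have "card (set v) = 4" unfolding v_def using a12 by (simp add: field_simps)
  moreover have "card (set [- pp 1, - pp 2, - pp 3]) \<le> 3" using card_length[of "[- pp 1, - pp 2, - pp 3]"] by simp
  ultimately have "\<not> set v \<subseteq> set [- pp 1, - pp 2, - pp 3]"
    using card_mono[of "set [- pp 1, - pp 2, - pp 3]" "set v"] by auto
  then obtain e where e: "e \<in> set v" "e \<notin> {- pp 1, - pp 2, - pp 3}" by auto
  have "\<exists>t. a1 - (a1 - a2) * (sin t)\<^sup>2 = e"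
  proof -
    have "e = a1 \<or> e = a1 - (a1 - a2) / 4 \<or> e = a1 - (a1 - a2) / 2 \<or> e = a2" using e(1) unfolding v_def by auto
    then show ?thesis
    proof (elim disjE)
      assume "e = a1" then show ?thesis by (intro exI[of _ 0]) simp
    next
      assume "e = a1 - (a1 - a2) / 4" then show ?thesis
        by (intro exI[of _ "pi/6"]) (simp add: sin_30 power2_eq_square field_simps)
    next
      assume "e = a1 - (a1 - a2) / 2" then show ?thesis
        by (intro exI[of _ "pi/4"]) (simp add: sin_45 power2_eq_square field_simps)
    next
      assume "e = a2" then show ?thesis by (intro exI[of _ "pi/2"]) simp
    qed
  qed
  then obtain t where t: "a1 - (a1 - a2) * (sin t)\<^sup>2 = e" by blast
  define x0 where "x0 = ellF k t / s"
  have Ex0: "E x0 = e" unfolding x0_def E_at t ..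
  have "Fi i x0 \<noteq> 0" if i: "i \<in> {1,2,3}" for i
  proof -
    have "E x0 + pp i \<noteq> 0" using e(2) i Ex0 by auto
    then show ?thesis unfolding Fi_eq using dd_nz[OF i] by simp
  qed
  then show ?thesis by blast
qed

definition "Lset = {(of_int n * T, t) | n t. \<exists>k1 k2::int.
   of_int n * th 1 - of_int n * th 3 + (x1 - x3) * t = 2 * pi * of_int k1
 \<and> of_int n * th 2 - of_int n * th 3 + (x2 - x3) * t = 2 * pi * of_int k2}"

lemma Psi_shift: assumes "i \<in> {1,2,3}"
  shows "Psi i (x + of_int n * T) (y + t)
       = exp (\<i> * complex_of_real (of_int n * th i + al i * t)) * Psi i x y"
proof -
  have "Gi i (x + of_int n * T) + al i * (y + t) = (Gi i x + al i * y) + (of_int n * th i + al i * t)"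
    using Gi_shift[OF assms] by (simp add: algebra_simps)
  then have "Psi i (x + of_int n * T) (y + t) = complex_of_real (Fi i x) *
     exp (\<i> * complex_of_real ((Gi i x + al i * y) + (of_int n * th i + al i * t)))"
    by (simp only: Psi_eq Fi_shift)
  also have "\<dots> = exp (\<i> * complex_of_real (of_int n * th i + al i * t)) *
     (complex_of_real (Fi i x) * exp (\<i> * complex_of_real (Gi i x + al i * y)))"
    by (simp only: exp_split mult_ac)
  also have "\<dots> = exp (\<i> * complex_of_real (of_int n * th i + al i * t)) * Psi i x y"
    by (simp only: Psi_eq)
  finally show ?thesis .
qed

lemma lattice_eq: "period_lattice Psi = Lset"
proof
  show "period_lattice Psi \<subseteq> Lset"
  proof
    fix w assume w: "w \<in> period_lattice Psi"
    obtain n :: int where n: "fst w = of_int n * T" using period_fst[OF w] by blast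
    define t where "t = snd w"
    obtain x0 where x0: "\<forall>i\<in>{1,2,3}. Fi i x0 \<noteq> 0" using exists_x0 by blast
    obtain l :: complex where hl: "\<forall>i\<in>{1,2,3}. Psi i (x0 + fst w) (0 + snd w) = l * Psi i x0 0"
      using w unfolding period_lattice_def by blast
    have ex: "exp (\<i> * complex_of_real (of_int n * th i + al i * t)) = l" if i: "i \<in> {1,2,3}" for i
    proof -
      have h1: "Psi i (x0 + fst w) (0 + snd w) = l * Psi i x0 0" by (rule bspec[OF hl i])
      have h2: "Psi i (x0 + of_int n * T) (0 + t) = exp (\<i> * complex_of_real (of_int n * th i + al i * t)) * Psi i x0 0"
        by (rule Psi_shift[OF i])
      have "exp (\<i> * complex_of_real (of_int n * th i + al i * t)) * Psi i x0 0 = l * Psi i x0 0"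
        using h1 h2 unfolding n t_def by metis
      moreover have "Psi i x0 0 \<noteq> 0" unfolding Psi_eq using bspec[OF x0 i] by simp
      ultimately show ?thesis using mult_right_cancel by blast
    qed
    have e13: "exp (\<i> * complex_of_real (of_int n * th 1 + x1 * t)) = exp (\<i> * complex_of_real (of_int n * th 3 + x3 * t))"
      using ex[of 1] ex[of 3] by (simp add: alp_def)
    have e23: "exp (\<i> * complex_of_real (of_int n * th 2 + x2 * t)) = exp (\<i> * complex_of_real (of_int n * th 3 + x3 * t))"
      using ex[of 2] ex[of 3] by (simp add: alp_def)
    obtain k1 :: int where k1: "of_int n * th 1 + x1 * t = of_int n * th 3 + x3 * t + 2 * pi * of_int k1"
      using exp_i_eq_real[OF e13] by blast
    obtain k2 :: int where k2: "of_int n * th 2 + x2 * t = of_int n * th 3 + x3 * t + 2 * pi * of_int k2"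
      using exp_i_eq_real[OF e23] by blast
    have "w = (of_int n * T, t)" using n t_def by (metis prod.collapse)
    moreover have "of_int n * th 1 - of_int n * th 3 + (x1 - x3) * t = 2 * pi * of_int k1"
      using k1 by (simp add: algebra_simps)
    moreover have "of_int n * th 2 - of_int n * th 3 + (x2 - x3) * t = 2 * pi * of_int k2"
      using k2 by (simp add: algebra_simps)
    ultimately show "w \<in> Lset" unfolding Lset_def by blast
  qed
next
  show "Lset \<subseteq> period_lattice Psi"
  proof
    fix w assume "w \<in> Lset"
    then obtain n t k1 k2 where w: "w = (of_int n * T, t)"
      and k1: "of_int n * th 1 - of_int n * th 3 + (x1 - x3) * t = 2 * pi * of_int k1"
      and k2: "of_int n * th 2 - of_int n * th 3 + (x2 - x3) * t = 2 * pi * of_int k2"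
      unfolding Lset_def by blast
    define l where "l = exp (\<i> * complex_of_real (of_int n * th 3 + x3 * t))"
    have ex: "exp (\<i> * complex_of_real (of_int n * th i + al i * t)) = l" if i: "i \<in> {1,2,3}" for i
    proof -
      have "i = 1 \<or> i = 2 \<or> i = 3" using i by auto
      then show ?thesis
      proof (elim disjE)
        assume "i = 1"
        have "of_int n * th 1 + x1 * t = (of_int n * th 3 + x3 * t) + 2 * pi * of_int k1"
          using k1 by (simp add: algebra_simps)
        then show ?thesis using \<open>i = 1\<close> unfolding l_def by (simp only: al_simps exp_i_shift)
      next
        assume "i = 2"
        have "of_int n * th 2 + x2 * t = (of_int n * th 3 + x3 * t) + 2 * pi * of_int k2"
          using k2 by (simp add: algebra_simps)
        then show ?thesis using \<open>i = 2\<close> unfolding l_def by (simp only: al_simps exp_i_shift)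
      next
        assume "i = 3" then show ?thesis unfolding l_def by simp
      qed
    qed
    have "\<forall>x y. \<exists>l::complex. l \<noteq> 0 \<and> (\<forall>i\<in>{1,2,3}. Psi i (x + fst w) (y + snd w) = l * Psi i x y)"
    proof (intro allI exI[of _ l] conjI ballI)
      show "l \<noteq> 0" unfolding l_def by simp
      fix x y :: real and i :: nat assume i: "i \<in> {1,2,3}"
      have "Psi i (x + of_int n * T) (y + t) = exp (\<i> * complex_of_real (of_int n * th i + al i * t)) * Psi i x y"
        by (rule Psi_shift[OF i])
      then show "Psi i (x + fst w) (y + snd w) = l * Psi i x y"
        using ex[OF i] w by simp
    qed
    then show "w \<in> period_lattice Psi" unfolding period_lattice_def by simp
  qed
qed

end

context tdata2
begin

lemma Lset_comb:
  assumes "(of_int n1 * T, t1) \<in> Lset" "(of_int n2 * T, t2) \<in> Lset"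
  shows "(of_int (p * n1 + q * n2) * T, of_int p * t1 + of_int q * t2) \<in> Lset"
proof -
  have T0: "T \<noteq> 0" using T_pos by simp
  obtain m1 s1 k1 k1' where A: "(of_int n1 * T, t1) = (of_int m1 * T, s1)"
     "of_int m1 * th 1 - of_int m1 * th 3 + (x1 - x3) * s1 = 2 * pi * of_int k1"
     "of_int m1 * th 2 - of_int m1 * th 3 + (x2 - x3) * s1 = 2 * pi * of_int k1'"
    using assms(1) unfolding Lset_def by blast
  obtain m2 s2 k2 k2' where B: "(of_int n2 * T, t2) = (of_int m2 * T, s2)"
     "of_int m2 * th 1 - of_int m2 * th 3 + (x1 - x3) * s2 = 2 * pi * of_int k2"
     "of_int m2 * th 2 - of_int m2 * th 3 + (x2 - x3) * s2 = 2 * pi * of_int k2'"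
    using assms(2) unfolding Lset_def by blast
  have "m1 = n1" "s1 = t1" using A(1) T0 by auto
  have "m2 = n2" "s2 = t2" using B(1) T0 by auto
  have e1: "of_int (p * n1 + q * n2) * th 1 - of_int (p * n1 + q * n2) * th 3 + (x1 - x3) * (of_int p * t1 + of_int q * t2)
      = 2 * pi * of_int (p * k1 + q * k2)"
  proof -
    have "of_int (p * n1 + q * n2) * th 1 - of_int (p * n1 + q * n2) * th 3 + (x1 - x3) * (of_int p * t1 + of_int q * t2)
      = of_int p * (of_int n1 * th 1 - of_int n1 * th 3 + (x1 - x3) * t1) + of_int q * (of_int n2 * th 1 - of_int n2 * th 3 + (x1 - x3) * t2)"
      by (simp add: algebra_simps)
    also have "\<dots> = 2 * pi * of_int (p * k1 + q * k2)"
      using A(2) B(2) \<open>m1 = n1\<close> \<open>s1 = t1\<close> \<open>m2 = n2\<close> \<open>s2 = t2\<close> by (simp add: algebra_simps)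
    finally show ?thesis .
  qed
  have e2: "of_int (p * n1 + q * n2) * th 2 - of_int (p * n1 + q * n2) * th 3 + (x2 - x3) * (of_int p * t1 + of_int q * t2)
      = 2 * pi * of_int (p * k1' + q * k2')"
  proof -
    have "of_int (p * n1 + q * n2) * th 2 - of_int (p * n1 + q * n2) * th 3 + (x2 - x3) * (of_int p * t1 + of_int q * t2)
      = of_int p * (of_int n1 * th 2 - of_int n1 * th 3 + (x2 - x3) * t1) + of_int q * (of_int n2 * th 2 - of_int n2 * th 3 + (x2 - x3) * t2)"
      by (simp add: algebra_simps)
    also have "\<dots> = 2 * pi * of_int (p * k1' + q * k2')"
      using A(3) B(3) \<open>m1 = n1\<close> \<open>s1 = t1\<close> \<open>m2 = n2\<close> \<open>s2 = t2\<close> by (simp add: algebra_simps)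
    finally show ?thesis .
  qed
  show ?thesis unfolding Lset_def using e1 e2 by blast
qed

lemma Lset_elem: "w \<in> Lset \<Longrightarrow> \<exists>n t. w = (of_int n * T, t) \<and> (of_int n * T, t) \<in> Lset"
  unfolding Lset_def by blast

end

locale tdata3 = tdata2 +
  fixes d1 d2 :: int
  assumes d1: "x1 - x3 = of_int d1" and d2: "x2 - x3 = of_int d2"
    and cop: "coprime d1 d2"
    and rat: "\<exists>\<tau>::real. (th 1 - th 3 + (x1 - x3) * \<tau>) / (2 * pi) \<in> \<rat>
                    \<and> (th 2 - th 3 + (x2 - x3) * \<tau>) / (2 * pi) \<in> \<rat>"
begin

lemma zero_2pi: "(of_int 0 * T, 2 * pi * of_int m) \<in> Lset"
proof -
  have "of_int 0 * th 1 - of_int 0 * th 3 + (x1 - x3) * (2 * pi * of_int m) = 2 * pi * of_int (d1 * m)"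
    by (simp add: d1)
  moreover have "of_int 0 * th 2 - of_int 0 * th 3 + (x2 - x3) * (2 * pi * of_int m) = 2 * pi * of_int (d2 * m)"
    by (simp add: d2)
  ultimately show ?thesis unfolding Lset_def by blast
qed

lemma zero_fiber: assumes "(of_int 0 * T, t) \<in> Lset" shows "\<exists>m::int. t = 2 * pi * of_int m"
proof -
  have T0: "T \<noteq> 0" using T_pos by simp
  obtain n t' k1 k2 where A: "(of_int 0 * T, t) = (of_int n * T, t')"
     "of_int n * th 1 - of_int n * th 3 + (x1 - x3) * t' = 2 * pi * of_int k1"
     "of_int n * th 2 - of_int n * th 3 + (x2 - x3) * t' = 2 * pi * of_int k2"
    using assms unfolding Lset_def by blast
  have "n = 0" "t' = t" using A(1) T0 by auto
  then have h1: "of_int d1 * t = 2 * pi * of_int k1" and h2: "of_int d2 * t = 2 * pi * of_int k2"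
    using A(2,3) d1 d2 by auto
  obtain u v :: int where uv: "u * d1 + v * d2 = 1"
    using cop bezout_int[of d1 d2] by (metis coprime_iff_gcd_eq_1)
  have "t = t * (of_int u * of_int d1 + of_int v * of_int d2)"
    using arg_cong[OF uv, of "real_of_int"] by simp
  also have "\<dots> = of_int u * (of_int d1 * t) + of_int v * (of_int d2 * t)" by (simp add: algebra_simps)
  also have "\<dots> = 2 * pi * of_int (u * k1 + v * k2)" using h1 h2 by (simp add: algebra_simps)
  finally show ?thesis by blast
qed

lemma exists_pos: "\<exists>n::nat. n > 0 \<and> (\<exists>t. (of_int (int n) * T, t) \<in> Lset)"
proof -
  obtain \<tau> where q1: "(th 1 - th 3 + (x1 - x3) * \<tau>) / (2 * pi) \<in> \<rat>"
    and q2: "(th 2 - th 3 + (x2 - x3) * \<tau>) / (2 * pi) \<in> \<rat>" using rat by blast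
  obtain p1 m1 :: int where m1: "m1 > 0" and e1: "(th 1 - th 3 + (x1 - x3) * \<tau>) / (2 * pi) = of_int p1 / of_int m1"
    using Rats_cases'[OF q1] by metis
  obtain p2 m2 :: int where m2: "m2 > 0" and e2: "(th 2 - th 3 + (x2 - x3) * \<tau>) / (2 * pi) = of_int p2 / of_int m2"
    using Rats_cases'[OF q2] by metis
  define N where "N = m1 * m2"
  have Npos: "N > 0" unfolding N_def using m1 m2 by simp
  have f1: "th 1 - th 3 + (x1 - x3) * \<tau> = 2 * pi * of_int p1 / of_int m1"
    using e1 m1 by (simp add: field_simps)
  have f2: "th 2 - th 3 + (x2 - x3) * \<tau> = 2 * pi * of_int p2 / of_int m2"
    using e2 m2 by (simp add: field_simps)
  have g1: "of_int N * th 1 - of_int N * th 3 + (x1 - x3) * (of_int N * \<tau>) = 2 * pi * of_int (p1 * m2)"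
  proof -
    have "of_int N * th 1 - of_int N * th 3 + (x1 - x3) * (of_int N * \<tau>) = of_int N * (th 1 - th 3 + (x1 - x3) * \<tau>)"
      by (simp add: algebra_simps)
    also have "\<dots> = 2 * pi * of_int (p1 * m2)" unfolding f1 N_def using m1 by (simp add: field_simps)
    finally show ?thesis .
  qed
  have g2: "of_int N * th 2 - of_int N * th 3 + (x2 - x3) * (of_int N * \<tau>) = 2 * pi * of_int (p2 * m1)"
  proof -
    have "of_int N * th 2 - of_int N * th 3 + (x2 - x3) * (of_int N * \<tau>) = of_int N * (th 2 - th 3 + (x2 - x3) * \<tau>)"
      by (simp add: algebra_simps)
    also have "\<dots> = 2 * pi * of_int (p2 * m1)" unfolding f2 N_def using m2 by (simp add: field_simps)
    finally show ?thesis .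
  qed
  have "(of_int N * T, of_int N * \<tau>) \<in> Lset" unfolding Lset_def using g1 g2 by blast
  moreover have "of_int (int (nat N)) = (of_int N :: real)" using Npos by simp
  ultimately show ?thesis using Npos by (intro exI[of _ "nat N"]) auto
qed

definition "NN = (LEAST n::nat. n > 0 \<and> (\<exists>t. (of_int (int n) * T, t) \<in> Lset))"

lemma NN_prop: "NN > 0" "\<exists>t. (of_int (int NN) * T, t) \<in> Lset"
  using LeastI_ex[OF exists_pos] unfolding NN_def by auto

lemma NN_min: "0 < n \<Longrightarrow> (of_int (int n) * T, t) \<in> Lset \<Longrightarrow> NN \<le> n"
  unfolding NN_def by (rule Least_le) blast

definition "tN = (SOME t. (of_int (int NN) * T, t) \<in> Lset)"

lemma tN: "(of_int (int NN) * T, tN) \<in> Lset"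
  unfolding tN_def using NN_prop(2) by (rule someI_ex)

definition "uB = (of_int (int NN) * T, tN)"
definition "wB = (0::real, 2 * pi)"

lemma Lset_basis: "Lset = {of_int m *\<^sub>R uB + of_int n *\<^sub>R wB | m n. True}"
proof
  show "{of_int m *\<^sub>R uB + of_int n *\<^sub>R wB | m n. True} \<subseteq> Lset"
  proof
    fix w assume "w \<in> {of_int m *\<^sub>R uB + of_int n *\<^sub>R wB | m n. True}"
    then obtain m n :: int where w: "w = of_int m *\<^sub>R uB + of_int n *\<^sub>R wB" by blast
    have "(of_int (m * int NN + n * 0) * T, of_int m * tN + of_int n * (2 * pi * of_int 1)) \<in> Lset"
      by (rule Lset_comb[OF tN zero_2pi])
    then show "w \<in> Lset"
      unfolding w uB_def wB_def by (simp add: algebra_simps)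
  qed
next
  show "Lset \<subseteq> {of_int m *\<^sub>R uB + of_int n *\<^sub>R wB | m n. True}"
  proof
    fix w assume "w \<in> Lset"
    then obtain n t where w: "w = (of_int n * T, t)" and wL: "(of_int n * T, t) \<in> Lset"
      using Lset_elem by blast
    define q where "q = n div int NN"
    define r where "r = n mod int NN"
    have Npos: "int NN > 0" using NN_prop(1) by simp
    have nqr: "n = q * int NN + r" unfolding q_def r_def by simp
    have r0: "0 \<le> r" "r < int NN" unfolding r_def using Npos by auto
    have rL: "(of_int (1 * n + (- q) * int NN) * T, of_int 1 * t + of_int (- q) * tN) \<in> Lset"
      by (rule Lset_comb[OF wL tN])
    have rr: "1 * n + (- q) * int NN = r" using nqr by simp
    have rL': "(of_int r * T, t - of_int q * tN) \<in> Lset" using rL[unfolded rr] by simp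
    have "r = 0"
    proof (rule ccontr)
      assume "r \<noteq> 0"
      then have "0 < nat r" using r0 by simp
      moreover have "(of_int (int (nat r)) * T, t - of_int q * tN) \<in> Lset"
        using rL' r0 by simp
      ultimately have "NN \<le> nat r" by (rule NN_min)
      then show False using r0 by linarith
    qed
    then have "(of_int 0 * T, t - of_int q * tN) \<in> Lset" using rL' by simp
    then obtain m :: int where m: "t - of_int q * tN = 2 * pi * of_int m" using zero_fiber by blast
    have "w = of_int q *\<^sub>R uB + of_int m *\<^sub>R wB"
      unfolding w uB_def wB_def using nqr \<open>r = 0\<close> m by (simp add: algebra_simps)
    then show "w \<in> {of_int m *\<^sub>R uB + of_int n *\<^sub>R wB | m n. True}" by blast
  qed
qed

lemma det_basis: "fst uB * snd wB - snd uB * fst wB = 2 * pi * of_int (int NN) * T"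
  unfolding uB_def wB_def by simp

lemma basis_exists: "lattice_basis (period_lattice Psi) uB wB"
  unfolding lattice_basis_def lattice_eq det_basis
  using Lset_basis NN_prop(1) T_pos by simp

end

lemma div_int_pos: "(b::real) > 0 \<Longrightarrow> (0 \<le> y / b \<and> y / b < 1) \<longleftrightarrow> y \<in> {0..<b}"
  by (auto simp: zero_le_divide_iff divide_less_eq)

lemma div_int_neg: "(b::real) < 0 \<Longrightarrow> (0 \<le> y / b \<and> y / b < 1) \<longleftrightarrow> y \<in> {b<..0}"
  by (auto simp: zero_le_divide_iff divide_less_eq)

context tdata
begin

lemma E_meas[measurable]: "E \<in> borel_measurable borel"
  by (rule borel_measurable_continuous_onI[OF E_cont])

lemma E_nonneg: "0 \<le> E x" using E_bounds(1)[of x] a12 by simp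

lemma E_int_cc: assumes "p \<le> q" shows "(E has_integral (Phi q - Phi p)) {p..q}"
proof (rule fundamental_theorem_of_calculus[OF assms])
  fix x assume "x \<in> {p..q}"
  show "(Phi has_vector_derivative E x) (at x within {p..q})"
    using Phi_deriv[of x] by (simp add: has_real_derivative_iff_has_vector_derivative has_vector_derivative_at_within)
qed

lemma E_int_co: assumes "p \<le> q" shows "(E has_integral (Phi q - Phi p)) {p..<q}"
proof -
  have "(E has_integral (Phi q - Phi p)) {p..<q} \<longleftrightarrow> (E has_integral (Phi q - Phi p)) {p..q}"
    by (rule has_integral_spike_set_eq) (auto intro: negligible_subset[of "{q}"])
  then show ?thesis using E_int_cc[OF assms] by simp
qed

lemma E_int_oc: assumes "p \<le> q" shows "(E has_integral (Phi q - Phi p)) {p<..q}"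
proof -
  have "(E has_integral (Phi q - Phi p)) {p<..q} \<longleftrightarrow> (E has_integral (Phi q - Phi p)) {p..q}"
    by (rule has_integral_spike_set_eq) (auto intro: negligible_subset[of "{p}"])
  then show ?thesis using E_int_cc[OF assms] by simp
qed

lemma Phi_T_pos: "Phi T > 0"
proof -
  have "0 < pi\<^sup>2 * (a1 + a2) / s" using s_pos a12 by simp
  then have "0 < 2 * pi * Phi T" using Phi_T_bound by linarith
  then show ?thesis by (simp add: zero_less_mult_iff)
qed

lemma inner_int:
  assumes u1: "u1 = of_int ju * T" "u1 \<noteq> 0"
  shows "(\<integral>\<^sup>+x. ennreal (if 0 \<le> x / u1 - cc \<and> x / u1 - cc < 1 then E x else 0) \<partial>lborel)
         = ennreal (\<bar>of_int ju\<bar> * Phi T)"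
proof (cases "u1 > 0")
  case True
  have ju: "ju > 0" using True u1 T_pos by (simp add: zero_less_mult_iff)
  have set: "(0 \<le> x / u1 - cc \<and> x / u1 - cc < 1) \<longleftrightarrow> x \<in> {u1 * cc..<u1 * cc + u1}" for x
  proof -
    have "x / u1 - cc = (x - u1 * cc) / u1" using u1 by (simp add: field_simps)
    then show ?thesis using div_int_pos[OF True, of "x - u1 * cc"] by auto
  qed
  have "(\<integral>\<^sup>+x. ennreal (if 0 \<le> x / u1 - cc \<and> x / u1 - cc < 1 then E x else 0) \<partial>lborel)
      = (\<integral>\<^sup>+x. ennreal (indicator {u1 * cc..<u1 * cc + u1} x * E x) \<partial>lborel)"
    by (intro nn_integral_cong) (subst set, simp add: indicator_def)
  also have "\<dots> = ennreal (Phi (u1 * cc + u1) - Phi (u1 * cc))"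
    by (rule nn_integral_has_integral_lebesgue[OF E_nonneg E_int_co]) (use True in simp)
  also have "Phi (u1 * cc + u1) - Phi (u1 * cc) = of_int ju * Phi T"
    using Phi_shift[of "u1 * cc" ju] u1 by simp
  finally show ?thesis using ju by simp
next
  case False
  then have neg: "u1 < 0" using u1(2) by linarith
  have ju: "ju < 0" using neg u1 T_pos by (simp add: mult_less_0_iff)
  have set: "(0 \<le> x / u1 - cc \<and> x / u1 - cc < 1) \<longleftrightarrow> x \<in> {u1 * cc + u1<..u1 * cc}" for x
  proof -
    have "x / u1 - cc = (x - u1 * cc) / u1" using u1 by (simp add: field_simps)
    then show ?thesis using div_int_neg[OF neg, of "x - u1 * cc"] by auto
  qed
  have "(\<integral>\<^sup>+x. ennreal (if 0 \<le> x / u1 - cc \<and> x / u1 - cc < 1 then E x else 0) \<partial>lborel)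
      = (\<integral>\<^sup>+x. ennreal (indicator {u1 * cc + u1<..u1 * cc} x * E x) \<partial>lborel)"
    by (intro nn_integral_cong) (subst set, simp add: indicator_def)
  also have "\<dots> = ennreal (Phi (u1 * cc) - Phi (u1 * cc + u1))"
    by (rule nn_integral_has_integral_lebesgue[OF E_nonneg E_int_oc]) (use neg in simp)
  also have "Phi (u1 * cc) - Phi (u1 * cc + u1) = - of_int ju * Phi T"
    using Phi_shift[of "u1 * cc" ju] u1 by simp
  finally show ?thesis using ju by simp
qed

lemma outer_int:
  assumes "u1 \<noteq> 0" "D \<noteq> 0" "K \<ge> 0"
  shows "(\<integral>\<^sup>+y. ennreal (if 0 \<le> u1 * y / D \<and> u1 * y / D < 1 then K else 0) \<partial>lborel)
         = ennreal (K * \<bar>D / u1\<bar>)"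
proof (cases "D / u1 > 0")
  case True
  have set: "(0 \<le> u1 * y / D \<and> u1 * y / D < 1) \<longleftrightarrow> y \<in> {0..<D / u1}" for y
  proof -
    have "u1 * y / D = y / (D / u1)" using assms by simp
    then show ?thesis using div_int_pos[OF True, of y] by (simp add: ac_simps)
  qed
  have "(\<integral>\<^sup>+y. ennreal (if 0 \<le> u1 * y / D \<and> u1 * y / D < 1 then K else 0) \<partial>lborel)
      = (\<integral>\<^sup>+y. ennreal K * indicator {0..<D / u1} y \<partial>lborel)"
    by (intro nn_integral_cong) (subst set, simp add: indicator_def)
  also have "\<dots> = ennreal K * emeasure lborel {0..<D / u1}" by (rule nn_integral_cmult_indicator) simp
  also have "\<dots> = ennreal K * ennreal (D / u1)" using True by simp
  also have "\<dots> = ennreal (K * (D / u1))" by (rule ennreal_mult[symmetric]) (use True assms in auto)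
  also have "K * (D / u1) = K * \<bar>D / u1\<bar>" by (simp only: abs_of_pos[OF True])
  finally show ?thesis .
next
  case False
  then have neg: "D / u1 < 0" using assms by (simp add: linorder_not_less le_less)
  have set: "(0 \<le> u1 * y / D \<and> u1 * y / D < 1) \<longleftrightarrow> y \<in> {D / u1<..0}" for y
  proof -
    have "u1 * y / D = y / (D / u1)" using assms by simp
    then show ?thesis using div_int_neg[OF neg, of y] by (simp add: ac_simps)
  qed
  have "(\<integral>\<^sup>+y. ennreal (if 0 \<le> u1 * y / D \<and> u1 * y / D < 1 then K else 0) \<partial>lborel)
      = (\<integral>\<^sup>+y. ennreal K * indicator {D / u1<..0} y \<partial>lborel)"
    by (intro nn_integral_cong) (subst set, simp add: indicator_def)
  also have "\<dots> = ennreal K * emeasure lborel {D / u1<..0}" by (rule nn_integral_cmult_indicator) simp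
  also have "\<dots> = ennreal K * ennreal (0 - D / u1)" using neg by simp
  also have "\<dots> = ennreal (K * (0 - D / u1))" by (rule ennreal_mult[symmetric]) (use neg assms in auto)
  also have "K * (0 - D / u1) = K * \<bar>D / u1\<bar>" by (simp only: abs_of_neg[OF neg] diff_0)
  finally show ?thesis .
qed

end

context tdata
begin

lemma par_integral_u:
  fixes u w :: "real \<times> real"
  assumes ju: "fst u = of_int ju * T" and u1nz: "fst u \<noteq> 0"
    and Dnz: "fst u * snd w - snd u * fst w \<noteq> 0"
  shows "((\<lambda>z. E (fst z)) has_integral (\<bar>fst u * snd w - snd u * fst w\<bar> * Phi T / T)) (fund_par u w)"
proof -
  obtain u1 u2 where u: "u = (u1, u2)" by (cases u)
  obtain w1 w2 where w: "w = (w1, w2)" by (cases w)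
  define D where "D = u1 * w2 - u2 * w1"
  have D0: "D \<noteq> 0" using Dnz unfolding D_def u w by simp
  have u10: "u1 \<noteq> 0" using u1nz u by simp
  have ju1: "u1 = of_int ju * T" using ju u by simp
  define sg where "sg z = (fst z * w2 - snd z * w1) / D" for z :: "real \<times> real"
  define tu where "tu z = (u1 * snd z - u2 * fst z) / D" for z :: "real \<times> real"
  have mem: "z \<in> fund_par u w \<longleftrightarrow> (0 \<le> sg z \<and> sg z < 1 \<and> 0 \<le> tu z \<and> tu z < 1)" for z
  proof
    assume "z \<in> fund_par u w"
    then obtain a b where z: "z = a *\<^sub>R u + b *\<^sub>R w" and ab: "0 \<le> a" "a < 1" "0 \<le> b" "b < 1"
      unfolding fund_par_def by blast
    have "sg z = a" unfolding sg_def z u w using D0 by (simp add: field_simps D_def, (simp add: algebra_simps)?)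
    moreover have "tu z = b" unfolding tu_def z u w using D0 by (simp add: field_simps D_def, (simp add: algebra_simps)?)
    ultimately show "0 \<le> sg z \<and> sg z < 1 \<and> 0 \<le> tu z \<and> tu z < 1" using ab by simp
  next
    assume h: "0 \<le> sg z \<and> sg z < 1 \<and> 0 \<le> tu z \<and> tu z < 1"
    have "z = sg z *\<^sub>R u + tu z *\<^sub>R w"
    proof -
      obtain x y where zxy: "z = (x, y)" by (cases z)
      have n1: "(x * w2 - y * w1) * u1 + (u1 * y - u2 * x) * w1 = x * D" unfolding D_def by (simp add: algebra_simps)
      have n2: "(x * w2 - y * w1) * u2 + (u1 * y - u2 * x) * w2 = y * D" unfolding D_def by (simp add: algebra_simps)
      have "sg z * u1 + tu z * w1 = ((x * w2 - y * w1) * u1 + (u1 * y - u2 * x) * w1) / D"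
        unfolding sg_def tu_def zxy by (simp add: add_divide_distrib)
      then have "sg z * u1 + tu z * w1 = x" using n1 D0 by simp
      moreover have "sg z * u2 + tu z * w2 = ((x * w2 - y * w1) * u2 + (u1 * y - u2 * x) * w2) / D"
        unfolding sg_def tu_def zxy by (simp add: add_divide_distrib)
      then have "sg z * u2 + tu z * w2 = y" using n2 D0 by simp
      ultimately show ?thesis unfolding u w zxy by simp
    qed
    then show "z \<in> fund_par u w" unfolding fund_par_def using h by blast
  qed
  define F where "F z = (if 0 \<le> sg z \<and> sg z < 1 \<and> 0 \<le> tu z \<and> tu z < 1 then E (fst z) else 0)" for z
  have "F \<in> borel_measurable (borel \<Otimes>\<^sub>M borel)"
    unfolding F_def sg_def tu_def by measurable
  then have F_meas[measurable]: "F \<in> borel_measurable borel" by (simp only: borel_prod)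
  have F_nonneg: "0 \<le> F z" for z unfolding F_def using E_nonneg by simp
  define G where "G x y = (if 0 \<le> x / u1 - y * w1 / D \<and> x / u1 - y * w1 / D < 1 \<and> 0 \<le> u1 * y / D \<and> u1 * y / D < 1 then E x else 0)" for x y
  have "(\<lambda>(x, y). G x y) \<in> borel_measurable (borel \<Otimes>\<^sub>M borel)"
    unfolding G_def by measurable
  then have G_meas[measurable]: "(\<lambda>(x, y). G x y) \<in> borel_measurable borel" by (simp only: borel_prod)
  have "(\<lambda>(x, y). ennreal (G x y)) \<in> borel_measurable (borel \<Otimes>\<^sub>M borel)"
    unfolding G_def by measurable
  then have Gm: "(\<lambda>(x, y). ennreal (G x y)) \<in> borel_measurable borel" by (simp only: borel_prod)
  have FG: "F (x, x * u2 / u1 + y) = G x y" for x y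
  proof -
    have "sg (x, x * u2 / u1 + y) = x / u1 - y * w1 / D"
      unfolding sg_def using D0 u10 by (simp add: field_simps D_def, (simp add: algebra_simps)?)
    moreover have "tu (x, x * u2 / u1 + y) = u1 * y / D"
      unfolding tu_def using D0 u10 by (simp add: field_simps)
    ultimately show ?thesis unfolding F_def G_def by simp
  qed
  define K where "K = \<bar>of_int ju\<bar> * Phi T"
  have K0: "K \<ge> 0" unfolding K_def using Phi_T_pos by simp
  have inner: "(\<integral>\<^sup>+x. ennreal (G x y) \<partial>lborel) = ennreal (if 0 \<le> u1 * y / D \<and> u1 * y / D < 1 then K else 0)" for y
  proof (cases "0 \<le> u1 * y / D \<and> u1 * y / D < 1")
    case True
    then have "(\<integral>\<^sup>+x. ennreal (G x y) \<partial>lborel)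
        = (\<integral>\<^sup>+x. ennreal (if 0 \<le> x / u1 - y * w1 / D \<and> x / u1 - y * w1 / D < 1 then E x else 0) \<partial>lborel)"
      unfolding G_def by simp
    also have "\<dots> = ennreal K" unfolding K_def by (rule inner_int[OF ju1 u10])
    finally show ?thesis using True by simp
  next
    case False
    then have "(\<lambda>x. ennreal (G x y)) = (\<lambda>x. 0)" unfolding G_def by auto
    then show ?thesis by (simp add: if_not_P[OF False])
  qed
  have "(\<integral>\<^sup>+z. ennreal (F z) \<partial>lborel) = (\<integral>\<^sup>+z. ennreal (F z) \<partial>(lborel \<Otimes>\<^sub>M lborel))"
    by (simp only: lborel_prod)
  also have "\<dots> = (\<integral>\<^sup>+x. \<integral>\<^sup>+y. ennreal (F (x, y)) \<partial>lborel \<partial>lborel)"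
    by (rule lborel.nn_integral_fst[symmetric]) (simp add: lborel_prod)
  also have "\<dots> = (\<integral>\<^sup>+x. \<integral>\<^sup>+y. ennreal (G x y) \<partial>lborel \<partial>lborel)"
  proof (rule nn_integral_cong)
    fix x
    have "(\<integral>\<^sup>+y. ennreal (F (x, y)) \<partial>lborel) = ennreal \<bar>1\<bar> * (\<integral>\<^sup>+y. ennreal (F (x, x * u2 / u1 + 1 * y)) \<partial>lborel)"
      by (rule nn_integral_real_affine) simp_all
    then show "(\<integral>\<^sup>+y. ennreal (F (x, y)) \<partial>lborel) = (\<integral>\<^sup>+y. ennreal (G x y) \<partial>lborel)"
      by (simp add: FG)
  qed
  also have "\<dots> = (\<integral>\<^sup>+y. \<integral>\<^sup>+x. ennreal (G x y) \<partial>lborel \<partial>lborel)"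
    by (rule lborel_pair.Fubini'[symmetric]) (simp add: lborel_prod Gm)
  also have "\<dots> = (\<integral>\<^sup>+y. ennreal (if 0 \<le> u1 * y / D \<and> u1 * y / D < 1 then K else 0) \<partial>lborel)"
    by (rule nn_integral_cong) (rule inner)
  also have "\<dots> = ennreal (K * \<bar>D / u1\<bar>)" by (rule outer_int[OF u10 D0 K0])
  finally have nn: "(\<integral>\<^sup>+z. ennreal (F z) \<partial>lborel) = ennreal (K * \<bar>D / u1\<bar>)" .
  have V: "K * \<bar>D / u1\<bar> = \<bar>fst u * snd w - snd u * fst w\<bar> * Phi T / T"
  proof -
    have ju0: "ju \<noteq> 0" using u10 ju1 by auto
    have "K * \<bar>D / u1\<bar> = \<bar>of_int ju\<bar> * Phi T * \<bar>D\<bar> / (\<bar>of_int ju\<bar> * T)"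
      unfolding K_def ju1 using T_pos by (simp add: abs_mult)
    also have "\<dots> = \<bar>D\<bar> * Phi T / T" using ju0 T_pos by (simp add: field_simps)
    finally show ?thesis unfolding D_def u w by simp
  qed
  have "(F has_integral (K * \<bar>D / u1\<bar>)) UNIV"
    by (rule nn_integral_has_integral[OF F_meas F_nonneg nn]) (use K0 in simp)
  moreover have "F = (\<lambda>z. if z \<in> fund_par u w then E (fst z) else 0)"
    unfolding F_def mem by simp
  ultimately show ?thesis using V has_integral_restrict_UNIV by metis
qed

lemma fund_par_swap: "fund_par u w = fund_par w u"
  unfolding fund_par_def by (auto, (metis add.commute)+)

lemma par_integral:
  fixes u w :: "real \<times> real"
  assumes ju: "fst u = of_int ju * T" and jw: "fst w = of_int jw * T"
    and Dnz: "fst u * snd w - snd u * fst w \<noteq> 0"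
  shows "((\<lambda>z. E (fst z)) has_integral (\<bar>fst u * snd w - snd u * fst w\<bar> * Phi T / T)) (fund_par u w)"
proof (cases "fst u = 0")
  case False
  then show ?thesis by (rule par_integral_u[OF ju _ Dnz])
next
  case True
  then have w0: "fst w \<noteq> 0" using Dnz by auto
  have D': "fst w * snd u - snd w * fst u \<noteq> 0" using Dnz by (simp add: algebra_simps)
  have "((\<lambda>z. E (fst z)) has_integral (\<bar>fst w * snd u - snd w * fst u\<bar> * Phi T / T)) (fund_par w u)"
    by (rule par_integral_u[OF jw w0 D'])
  moreover have "\<bar>fst w * snd u - snd w * fst u\<bar> = \<bar>fst u * snd w - snd u * fst w\<bar>"
    by (simp add: abs_minus_commute algebra_simps)
  ultimately show ?thesis by (simp add: fund_par_swap)
qed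

end

context tdata3
begin

lemma main_conclusion:
  "(\<exists>u w. lattice_basis (period_lattice Psi) u w)
    \<and> (\<forall>u w. lattice_basis (period_lattice Psi) u w \<longrightarrow>
         (\<lambda>z. 2 * exp (tor_v a1 a2 a3 (fst z))) integrable_on fund_par u w
       \<and> integral (fund_par u w) (\<lambda>z. 2 * exp (tor_v a1 a2 a3 (fst z)))
           > pi^2 * (a1 + a2) / sqrt (a1 + a3))"
proof (intro conjI allI impI)
  show "\<exists>u w. lattice_basis (period_lattice Psi) u w" using basis_exists by blast
next
  fix u w assume B: "lattice_basis (period_lattice Psi) u w"
  have Dnz: "fst u * snd w - snd u * fst w \<noteq> 0" and Leq: "Lset = {of_int m *\<^sub>R u + of_int n *\<^sub>R w | m n. True}"
    using B unfolding lattice_basis_def lattice_eq by auto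
  have uL: "u \<in> Lset" unfolding Leq by (rule CollectI, rule exI[of _ 1], rule exI[of _ 0]) simp
  have wL: "w \<in> Lset" unfolding Leq by (rule CollectI, rule exI[of _ 0], rule exI[of _ 1]) simp
  obtain m1 n1 :: int where u: "u = of_int m1 *\<^sub>R uB + of_int n1 *\<^sub>R wB"
    using uL unfolding Lset_basis by blast
  obtain m2 n2 :: int where w: "w = of_int m2 *\<^sub>R uB + of_int n2 *\<^sub>R wB"
    using wL unfolding Lset_basis by blast
  have fu: "fst u = of_int (m1 * int NN) * T" unfolding u uB_def wB_def by simp
  have fw: "fst w = of_int (m2 * int NN) * T" unfolding w uB_def wB_def by simp
  have det: "fst u * snd w - snd u * fst w = of_int (m1 * n2 - n1 * m2) * (2 * pi * of_int (int NN) * T)"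
    unfolding u w uB_def wB_def by (simp add: algebra_simps)
  have hi: "((\<lambda>z. E (fst z)) has_integral (\<bar>fst u * snd w - snd u * fst w\<bar> * Phi T / T)) (fund_par u w)"
    by (rule par_integral[OF fu fw Dnz])
  have feq: "(\<lambda>z. 2 * exp (tor_v a1 a2 a3 (fst z))) = (\<lambda>z. E (fst z))" unfolding E_def ..
  show "(\<lambda>z. 2 * exp (tor_v a1 a2 a3 (fst z))) integrable_on fund_par u w"
    unfolding feq using hi by blast
  have ival: "integral (fund_par u w) (\<lambda>z. 2 * exp (tor_v a1 a2 a3 (fst z))) = \<bar>fst u * snd w - snd u * fst w\<bar> * Phi T / T"
    unfolding feq using hi by (rule integral_unique)
  have mn: "m1 * n2 - n1 * m2 \<noteq> 0"
  proof
    assume "m1 * n2 - n1 * m2 = 0"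
    then have "real_of_int (m1 * n2 - n1 * m2) = 0" by (simp only: of_int_0)
    then have "fst u * snd w - snd u * fst w = 0" unfolding det by simp
    then show False using Dnz by simp
  qed
  then have mn1: "\<bar>real_of_int (m1 * n2 - n1 * m2)\<bar> \<ge> 1" by linarith
  have N1: "real (NN) \<ge> 1" using NN_prop(1) by simp
  have "\<bar>fst u * snd w - snd u * fst w\<bar> = \<bar>real_of_int (m1 * n2 - n1 * m2)\<bar> * (2 * pi * real NN * T)"
    unfolding det using T_pos by (simp add: abs_mult)
  also have "\<dots> \<ge> 1 * (2 * pi * 1 * T)"
    using mn1 N1 T_pos by (intro mult_mono) (auto intro!: mult_right_mono mult_left_mono)
  finally have dge: "\<bar>fst u * snd w - snd u * fst w\<bar> \<ge> 2 * pi * T" by simp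
  have "\<bar>fst u * snd w - snd u * fst w\<bar> * Phi T / T \<ge> 2 * pi * T * Phi T / T"
    using dge Phi_T_pos T_pos by (intro divide_right_mono mult_right_mono) auto
  then have "\<bar>fst u * snd w - snd u * fst w\<bar> * Phi T / T \<ge> 2 * pi * Phi T" using T_pos by simp
  moreover have "2 * pi * Phi T > pi^2 * (a1 + a2) / sqrt (a1 + a3)" using Phi_T_bound unfolding s_def .
  ultimately show "integral (fund_par u w) (\<lambda>z. 2 * exp (tor_v a1 a2 a3 (fst z))) > pi^2 * (a1 + a2) / sqrt (a1 + a3)"
    unfolding ival by linarith
qed

end

theorem lemma1:
  fixes \<alpha>1 \<alpha>2 \<alpha>3 :: int and a1 a2 c2 :: real
  defines "x1 \<equiv> real_of_int \<alpha>1" and "x2 \<equiv> real_of_int \<alpha>2" and "x3 \<equiv> real_of_int \<alpha>3"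
  defines "b \<equiv> - x1 - x2 - x3"
      and "c \<equiv> x1 * x2 + x1 * x3 + x2 * x3"
      and "c1 \<equiv> - x1 * x2 * x3"
  defines "P \<equiv> a1^3 * a2^2 + a1^2 * a2^3 + (a1^2 * a2 + a1 * a2^2) * b * c1
               + (a1^2 + a2^2) * c1^2 + 2 * a1^2 * a2^2 * c"
      and "R \<equiv> (a1 + a2) * c1^2 - a1^2 * a2^2 + a1 * a2 * b * c1"
  defines "a3 \<equiv> (c1^2 + c2^2) / (a1 * a2)"
  defines "a \<equiv> (b * c1 + a1 * a3 + a2 * a3 - a1 * a2) / c2"
  assumes distinct: "\<alpha>1 \<noteq> \<alpha>2" "\<alpha>1 \<noteq> \<alpha>3" "\<alpha>2 \<noteq> \<alpha>3"
      and coprime: "coprime (\<alpha>1 - \<alpha>3) (\<alpha>2 - \<alpha>3)"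
      and a_order: "a1 > a2" "a2 > 0"
      and P_nonpos: "P \<le> 0"
      and disc: "P^2 - (a1 - a2)^2 * R^2 \<ge> 0"
      and root: "(a1 - a2)^2 * c2^4 + 2 * P * c2^2 + R^2 = 0"
      and rational: "\<exists>\<tau>::real.
          (tor_G x1 x2 x3 a1 a2 a3 c1 c2 a 1 (tor_T a1 a2 a3)
            - tor_G x1 x2 x3 a1 a2 a3 c1 c2 a 3 (tor_T a1 a2 a3) + (x1 - x3) * \<tau>) / (2 * pi) \<in> \<rat>
        \<and> (tor_G x1 x2 x3 a1 a2 a3 c1 c2 a 2 (tor_T a1 a2 a3)
            - tor_G x1 x2 x3 a1 a2 a3 c1 c2 a 3 (tor_T a1 a2 a3) + (x2 - x3) * \<tau>) / (2 * pi) \<in> \<rat>"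
  shows "(\<exists>u w. lattice_basis (period_lattice (tor_psi x1 x2 x3 a1 a2 a3 c1 c2 a)) u w)
    \<and> (\<forall>u w. lattice_basis (period_lattice (tor_psi x1 x2 x3 a1 a2 a3 c1 c2 a)) u w \<longrightarrow>
         (\<lambda>z. 2 * exp (tor_v a1 a2 a3 (fst z))) integrable_on fund_par u w
       \<and> integral (fund_par u w) (\<lambda>z. 2 * exp (tor_v a1 a2 a3 (fst z)))
           > pi^2 * (a1 + a2) / sqrt (a1 + a3))"
proof -
  interpret T: tdata x1 x2 x3 a1 a2 c2 by unfold_locales (use a_order in auto)
  have e_b: "T.b = b" unfolding T.b_def b_def ..
  have e_c: "T.c = c" unfolding T.c_def c_def ..
  have e_c1: "T.c1 = c1" unfolding T.c1_def c1_def ..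
  have e_a3: "T.a3 = a3" unfolding T.a3_def a3_def e_c1 ..
  have e_a: "T.a = a" unfolding T.a_def a_def e_b e_c1 e_a3 ..
  have e_P: "T.P = P" unfolding T.P_def P_def e_b e_c e_c1 ..
  have e_R: "T.R = R" unfolding T.R_def R_def e_b e_c1 ..
  have dist': "x1 \<noteq> x2" "x1 \<noteq> x3" "x2 \<noteq> x3" using distinct unfolding x1_def x2_def x3_def by simp_all
  interpret T2: tdata2 x1 x2 x3 a1 a2 c2
    by unfold_locales (use dist' root e_P e_R in auto)
  have th: "T2.th i = tor_G x1 x2 x3 a1 a2 a3 c1 c2 a i (tor_T a1 a2 a3)" for i
    unfolding T2.th_def T2.Gi_def T.T_def e_a3 e_c1 e_a ..
  have d1: "x1 - x3 = of_int (\<alpha>1 - \<alpha>3)" and d2: "x2 - x3 = of_int (\<alpha>2 - \<alpha>3)"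
    unfolding x1_def x2_def x3_def by simp_all
  interpret T3: tdata3 x1 x2 x3 a1 a2 c2 "\<alpha>1 - \<alpha>3" "\<alpha>2 - \<alpha>3"
    by unfold_locales (use d1 d2 coprime rational th in auto)
  show ?thesis
    using T3.main_conclusion unfolding T2.Psi_def e_a3 e_c1 e_a .
qed

end
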